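(* Let $\{(\mathcal{X}_l,\mathring{\mathcal{X}}_l,p_l)\}_{l\in\mathcal{I}}$ be $B$-$B$-bimodules with specified projections with reduced free product $(\mathcal{X},\mathring{\mathcal{X}},p)$, and for each $l$ let $S_l\subset\mathcal{A}_{l,\mathcal{F}}\cup\mathcal{A}_{l,\mathcal{B}}$. For $1\le i\le m$ let $A_i\in\mathcal{A}_{k(i)}$ be a simple product of elements from $S_{k(i)}$. Assume: (1) there exist $1\le l_1<l_2\le m$ such that $A_{l_1},A_{l_1+1},\dots,A_{l_2}$ are not Boolean products; (2) either $l_1=1$ or $A_{l_1-1}$ is a Boolean product; (3) either $l_2=m$ or $A_{l_2+1}$ is a Boolean product; (4) $k(1)\ne k(2)\ne\cdots\ne k(m)$ (consecutive indices distinct); (5) $\mathbb{E}_{\mathcal{L}(\mathcal{X})}(A_{l_1})=\mathbb{E}_{\mathcal{L}(\mathcal{X})}(A_{l_1+1})=\cdots=\mathbb{E}_{\mathcal{L}(\mathcal{X})}(A_{l_2})=0$. Then $\mathbb{E}_{\mathcal{L}(\mathcal{X})}(A_1\cdots A_m)=0$.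
   Context: $B$ is a unital complex algebra. A $B$-$B$-bimodule with specified projection is a triple $(\mathcal{X},\mathring{\mathcal{X}},p)$ with $\mathcal{X}=B\oplus\mathring{\mathcal{X}}$ a direct sum of $B$-$B$-bimodules and $p(b\oplus\eta)=b$; $\mathcal{L}(\mathcal{X})$ is the algebra of linear operators on $\mathcal{X}$ respecting the bimodule structure and $\mathbb{E}_{\mathcal{L}(\mathcal{X})}(T)=p(T(1_B\oplus0))$. The reduced free product is $\mathcal{X}=B\oplus\mathring{\mathcal{X}}$ with $\mathring{\mathcal{X}}=\bigoplus_{n\ge1}\bigoplus_{i_1\ne\cdots\ne i_n}\mathring{\mathcal{X}}_{i_1}\otimes_B\cdots\otimes_B\mathring{\mathcal{X}}_{i_n}$ (consecutive indices distinct), $p$ the projection onto $B$. For $l\in\mathcal{I}$, $\mathcal{X}(l)=B\oplus\bigoplus_{n\ge1}\bigoplus_{i_1\ne\cdots\ne i_n,\ i_1\ne l}\mathring{\mathcal{X}}_{i_1}\otimes_B\cdots\otimes_B\mathring{\mathcal{X}}_{i_n}$, $V_l:\mathcal{X}\to\mathcal{X}_l\otimes_B\mathcal{X}(l)$ the natural isomorphism, $\lambda_l(a)=V_l^{-1}(a\otimes I)V_l$, $P_l$ the projection onto the summand $B\oplus\mathring{\mathcal{X}}_l$, $\mathcal{A}_{l,\mathcal{F}}=\lambda_l(\mathcal{L}(\mathcal{X}_l))$, $\mathcal{A}_{l,\mathcal{B}}=P_l\lambda_l(\mathcal{L}(\mathcal{X}_l))P_l$, $\mathcal{A}_l$ the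 algebra generated by both. A product $a_1\cdots a_r$ with all $a_t\in S_l$ is a simple product of elements from $S_l$; it is a Boolean product if some $a_t\in S_l\cap\mathcal{A}_{l,\mathcal{B}}$. *)

theory Defs
  imports Complex_Main
begin

text \<open>B is a type of class ring_1 together with a unital ring homomorphism
  from the complex numbers into the centre of B (the scalar structure).\<close>

definition cplx_alg :: "(complex \<Rightarrow> 'b::ring_1) \<Rightarrow> bool" where
  "cplx_alg e \<longleftrightarrow> e 1 = 1 \<and> (\<forall>x y. e (x + y) = e x + e y)
     \<and> (\<forall>x y. e (x * y) = e x * e y) \<and> (\<forall>c b. e c * b = b * e c)"

record ('b, 'x) bimod =
  bm_car  :: "'x set"
  bm_zero :: 'x
  bm_add  :: "'x \<Rightarrow> 'x \<Rightarrow> 'x"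
  bm_neg  :: "'x \<Rightarrow> 'x"
  bm_lact :: "'b \<Rightarrow> 'x \<Rightarrow> 'x"
  bm_ract :: "'x \<Rightarrow> 'b \<Rightarrow> 'x"

definition is_bimod :: "(complex \<Rightarrow> 'b::ring_1) \<Rightarrow> ('b, 'x, 'z) bimod_scheme \<Rightarrow> bool" where
  "is_bimod e M \<longleftrightarrow>
     (let C = bm_car M; z = bm_zero M; ad = bm_add M; ng = bm_neg M;
          la = bm_lact M; ra = bm_ract M in
     z \<in> C \<and> (\<forall>x\<in>C. \<forall>y\<in>C. ad x y \<in> C) \<and> (\<forall>x\<in>C. ng x \<in> C)
     \<and> (\<forall>b. \<forall>x\<in>C. la b x \<in> C \<and> ra x b \<in> C)
     \<and> (\<forall>x\<in>C. \<forall>y\<in>C. \<forall>w\<in>C. ad (ad x y) w = ad x (ad y w))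
     \<and> (\<forall>x\<in>C. \<forall>y\<in>C. ad x y = ad y x)
     \<and> (\<forall>x\<in>C. ad z x = x) \<and> (\<forall>x\<in>C. ad (ng x) x = z)
     \<and> (\<forall>x\<in>C. la 1 x = x \<and> ra x 1 = x)
     \<and> (\<forall>a b. \<forall>x\<in>C. la (a * b) x = la a (la b x) \<and> ra x (a * b) = ra (ra x a) b)
     \<and> (\<forall>a b. \<forall>x\<in>C. la (a + b) x = ad (la a x) (la b x) \<and> ra x (a + b) = ad (ra x a) (ra x b))
     \<and> (\<forall>a. \<forall>x\<in>C. \<forall>y\<in>C. la a (ad x y) = ad (la a x) (la a y) \<and> ra (ad x y) a = ad (ra x a) (ra y a))
     \<and> (\<forall>a b. \<forall>x\<in>C. la a (ra x b) = ra (la a x) b)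
     \<and> (\<forall>c. \<forall>x\<in>C. la (e c) x = ra x (e c)))"

text \<open>Elements of X_l are pairs (b, xi); the specified projection is fst.\<close>

definition Xcar :: "('b, 'x, 'z) bimod_scheme \<Rightarrow> ('b \<times> 'x) set" where
  "Xcar M = {(b, \<xi>). \<xi> \<in> bm_car M}"

definition is_op :: "('b::ring_1, 'x, 'z) bimod_scheme \<Rightarrow> ('b \<times> 'x \<Rightarrow> 'b \<times> 'x) \<Rightarrow> bool" where
  "is_op M a \<longleftrightarrow>
     (\<forall>x\<in>Xcar M. a x \<in> Xcar M)
   \<and> (\<forall>b \<xi> c \<eta>. \<xi> \<in> bm_car M \<longrightarrow> \<eta> \<in> bm_car M \<longrightarrow>
        a (b + c, bm_add M \<xi> \<eta>) = (fst (a (b, \<xi>)) + fst (a (c, \<eta>)), bm_add M (snd (a (b, \<xi>))) (snd (a (c, \<eta>)))))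
   \<and> (\<forall>c b \<xi>. \<xi> \<in> bm_car M \<longrightarrow>
        a (c * b, bm_lact M c \<xi>) = (c * fst (a (b, \<xi>)), bm_lact M c (snd (a (b, \<xi>))))
      \<and> a (b * c, bm_ract M \<xi> c) = (fst (a (b, \<xi>)) * c, bm_ract M (snd (a (b, \<xi>))) c))"

text \<open>Words: nonempty lists of letters (i, xi), xi in Xo_i, consecutive indices distinct.
  A word stands for the elementary tensor xi_1 (x)_B ... (x)_B xi_n.\<close>

definition alt_word :: "('i \<Rightarrow> ('b, 'x, 'z) bimod_scheme) \<Rightarrow> ('i \<times> 'x) list \<Rightarrow> bool" where
  "alt_word Xo w \<longleftrightarrow> w \<noteq> [] \<and> (\<forall>j. Suc j < length w \<longrightarrow> fst (w ! j) \<noteq> fst (w ! Suc j))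
     \<and> (\<forall>p\<in>set w. snd p \<in> bm_car (Xo (fst p)))"

definition ZW :: "('i \<Rightarrow> ('b, 'x, 'z) bimod_scheme) \<Rightarrow> (('i \<times> 'x) list \<Rightarrow> int) set" where
  "ZW Xo = {f. finite {w. f w \<noteq> 0} \<and> (\<forall>w. f w \<noteq> 0 \<longrightarrow> alt_word Xo w)}"

definition dlt :: "('i \<times> 'x) list \<Rightarrow> ('i \<times> 'x) list \<Rightarrow> int" where
  "dlt w = (\<lambda>u. if u = w then 1 else 0)"

text \<open>Generators of the relations: additivity in each tensor slot and B-balancing.\<close>
definition rel_gens :: "('i \<Rightarrow> ('b, 'x, 'z) bimod_scheme) \<Rightarrow> (('i \<times> 'x) list \<Rightarrow> int) set" where
  "rel_gens Xo =
     {(\<lambda>u. dlt (w[j := (fst (w ! j), bm_add (Xo (fst (w ! j))) \<xi> \<eta>)]) u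
            - dlt (w[j := (fst (w ! j), \<xi>)]) u - dlt (w[j := (fst (w ! j), \<eta>)]) u)
       | w j \<xi> \<eta>. alt_word Xo w \<and> j < length w
            \<and> \<xi> \<in> bm_car (Xo (fst (w ! j))) \<and> \<eta> \<in> bm_car (Xo (fst (w ! j)))}
   \<union> {(\<lambda>u. dlt (w[j := (fst (w ! j), bm_ract (Xo (fst (w ! j))) (snd (w ! j)) b)]) u
            - dlt (w[Suc j := (fst (w ! Suc j), bm_lact (Xo (fst (w ! Suc j))) b (snd (w ! Suc j)))]) u)
       | w j b. alt_word Xo w \<and> Suc j < length w}"

inductive_set rel_sub :: "('i \<Rightarrow> ('b, 'x, 'z) bimod_scheme) \<Rightarrow> (('i \<times> 'x) list \<Rightarrow> int) set"
  for Xo where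
    gen: "f \<in> rel_gens Xo \<Longrightarrow> f \<in> rel_sub Xo"
  | zero: "(\<lambda>_. 0) \<in> rel_sub Xo"
  | diff: "f \<in> rel_sub Xo \<Longrightarrow> g \<in> rel_sub Xo \<Longrightarrow> (\<lambda>u. f u - g u) \<in> rel_sub Xo"

text \<open>Classes in the quotient (the reduced part of the free product, Xo).\<close>
definition cls :: "('i \<Rightarrow> ('b, 'x, 'z) bimod_scheme) \<Rightarrow> (('i \<times> 'x) list \<Rightarrow> int)
     \<Rightarrow> (('i \<times> 'x) list \<Rightarrow> int) set" where
  "cls Xo f = {g \<in> ZW Xo. (\<lambda>u. f u - g u) \<in> rel_sub Xo}"

definition rep :: "('i \<Rightarrow> ('b, 'x, 'z) bimod_scheme) \<Rightarrow> (('i \<times> 'x) list \<Rightarrow> int) set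
     \<Rightarrow> (('i \<times> 'x) list \<Rightarrow> int)" where
  "rep Xo x = (SOME f. f \<in> ZW Xo \<and> x = cls Xo f)"

text \<open>The free product X = B (+) Xo; elements are pairs (b, class).\<close>
type_synonym ('b, 'i, 'x) fpel = "'b \<times> (('i \<times> 'x) list \<Rightarrow> int) set"
type_synonym ('b, 'i, 'x) fpop = "('b, 'i, 'x) fpel \<Rightarrow> ('b, 'i, 'x) fpel"

definition FPcar :: "('i \<Rightarrow> ('b, 'x, 'z) bimod_scheme) \<Rightarrow> ('b, 'i, 'x) fpel set" where
  "FPcar Xo = {(b, cls Xo f) | b f. f \<in> ZW Xo}"

definition restr :: "('i \<Rightarrow> ('b, 'x, 'z) bimod_scheme) \<Rightarrow> ('b, 'i, 'x) fpop \<Rightarrow> ('b, 'i, 'x) fpop" where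
  "restr Xo T = (\<lambda>x. if x \<in> FPcar Xo then T x else undefined)"

definition lactw :: "('i \<Rightarrow> ('b, 'x, 'z) bimod_scheme) \<Rightarrow> 'b \<Rightarrow> ('i \<times> 'x) list \<Rightarrow> ('i \<times> 'x) list" where
  "lactw Xo b w = (case w of [] \<Rightarrow> [] | p # r \<Rightarrow> (fst p, bm_lact (Xo (fst p)) b (snd p)) # r)"

text \<open>Image of an elementary tensor w under lambda_l(a) = V_l^{-1}(a (x) I)V_l,
  as a pair (B-component, representative in the free abelian group).\<close>
definition lam_word :: "('i \<Rightarrow> ('b::ring_1, 'x, 'z) bimod_scheme) \<Rightarrow> 'i \<Rightarrow> ('b \<times> 'x \<Rightarrow> 'b \<times> 'x)
     \<Rightarrow> ('i \<times> 'x) list \<Rightarrow> 'b \<times> (('i \<times> 'x) list \<Rightarrow> int)" where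
  "lam_word Xo l a w =
     (case w of [] \<Rightarrow> (0, \<lambda>_. 0)
      | p # r \<Rightarrow>
         (if fst p \<noteq> l then
            (let q = a (1, bm_zero (Xo l)) in
              (0, \<lambda>u. dlt (lactw Xo (fst q) w) u + dlt ((l, snd q) # w) u))
          else
            (let q = a (0, snd p) in
              (if r = [] then (fst q, dlt [(l, snd q)])
               else (0, \<lambda>u. dlt (lactw Xo (fst q) r) u + dlt ((l, snd q) # r) u)))))"

definition lam :: "('i \<Rightarrow> ('b::ring_1, 'x, 'z) bimod_scheme) \<Rightarrow> 'i \<Rightarrow> ('b \<times> 'x \<Rightarrow> 'b \<times> 'x)
     \<Rightarrow> ('b, 'i, 'x) fpop" where
  "lam Xo l a = restr Xo (\<lambda>x.
     (let f = rep Xo (snd x); q = a (fst x, bm_zero (Xo l)); S = {w. f w \<noteq> 0} in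
       (fst q + (\<Sum>w\<in>S. of_int (f w) * fst (lam_word Xo l a w)),
        cls Xo (\<lambda>u. dlt [(l, snd q)] u + (\<Sum>w\<in>S. f w * snd (lam_word Xo l a w) u)))))"

definition Ppr :: "('i \<Rightarrow> ('b, 'x, 'z) bimod_scheme) \<Rightarrow> 'i \<Rightarrow> ('b, 'i, 'x) fpop" where
  "Ppr Xo l = restr Xo (\<lambda>x.
     (fst x, cls Xo (\<lambda>w. if (\<exists>\<xi>. w = [(l, \<xi>)]) then rep Xo (snd x) w else 0)))"

definition AF :: "('i \<Rightarrow> ('b::ring_1, 'x, 'z) bimod_scheme) \<Rightarrow> 'i \<Rightarrow> ('b, 'i, 'x) fpop set" where
  "AF Xo l = lam Xo l ` {a. is_op (Xo l) a}"

definition AB :: "('i \<Rightarrow> ('b::ring_1, 'x, 'z) bimod_scheme) \<Rightarrow> 'i \<Rightarrow> ('b, 'i, 'x) fpop set" where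
  "AB Xo l = (\<lambda>a. restr Xo (Ppr Xo l \<circ> lam Xo l a \<circ> Ppr Xo l)) ` {a. is_op (Xo l) a}"

definition Exp :: "('i \<Rightarrow> ('b::ring_1, 'x, 'z) bimod_scheme) \<Rightarrow> ('b, 'i, 'x) fpop \<Rightarrow> 'b" where
  "Exp Xo T = fst (T (1, cls Xo (\<lambda>_. 0)))"

definition oprod :: "('a \<Rightarrow> 'a) list \<Rightarrow> 'a \<Rightarrow> 'a" where
  "oprod Ts = foldr (\<circ>) Ts id"

definition boolean_prod :: "('i \<Rightarrow> ('b::ring_1, 'x, 'z) bimod_scheme) \<Rightarrow> ('i \<Rightarrow> ('b, 'i, 'x) fpop set)
     \<Rightarrow> 'i \<Rightarrow> ('b, 'i, 'x) fpop list \<Rightarrow> bool" where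
  "boolean_prod Xo S l Ts \<longleftrightarrow> (\<exists>T\<in>set Ts. T \<in> S l \<inter> AB Xo l)"

end

theory Submission
  imports Defs
begin


section \<open>Bimodule facts\<close>

context
  fixes e :: "complex \<Rightarrow> 'b::ring_1" and M :: "('b, 'x, 'z) bimod_scheme"
  assumes bm: "is_bimod e M"
begin

lemma bz: "bm_zero M \<in> bm_car M"
  using bm unfolding is_bimod_def Let_def by auto

lemma badd: "x \<in> bm_car M \<Longrightarrow> y \<in> bm_car M \<Longrightarrow> bm_add M x y \<in> bm_car M"
  using bm unfolding is_bimod_def Let_def by auto

lemma bneg: "x \<in> bm_car M \<Longrightarrow> bm_neg M x \<in> bm_car M"
  using bm unfolding is_bimod_def Let_def by auto

lemma bla: "x \<in> bm_car M \<Longrightarrow> bm_lact M b x \<in> bm_car M"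
  using bm unfolding is_bimod_def Let_def by auto

lemma bra: "x \<in> bm_car M \<Longrightarrow> bm_ract M x b \<in> bm_car M"
  using bm unfolding is_bimod_def Let_def by auto

lemma bassoc: "x \<in> bm_car M \<Longrightarrow> y \<in> bm_car M \<Longrightarrow> w \<in> bm_car M \<Longrightarrow>
        bm_add M (bm_add M x y) w = bm_add M x (bm_add M y w)"
  using bm unfolding is_bimod_def Let_def by auto

lemma bcomm: "x \<in> bm_car M \<Longrightarrow> y \<in> bm_car M \<Longrightarrow> bm_add M x y = bm_add M y x"
  using bm unfolding is_bimod_def Let_def by auto

lemma bzl: "x \<in> bm_car M \<Longrightarrow> bm_add M (bm_zero M) x = x"
  using bm unfolding is_bimod_def Let_def by auto

lemma binv: "x \<in> bm_car M \<Longrightarrow> bm_add M (bm_neg M x) x = bm_zero M"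
  using bm unfolding is_bimod_def Let_def by auto

lemma bla1: "x \<in> bm_car M \<Longrightarrow> bm_lact M 1 x = x"
  using bm unfolding is_bimod_def Let_def by auto

lemma bra1: "x \<in> bm_car M \<Longrightarrow> bm_ract M x 1 = x"
  using bm unfolding is_bimod_def Let_def by auto

lemma blamul: "x \<in> bm_car M \<Longrightarrow> bm_lact M (a * b) x = bm_lact M a (bm_lact M b x)"
  using bm unfolding is_bimod_def Let_def by auto

lemma bramul: "x \<in> bm_car M \<Longrightarrow> bm_ract M x (a * b) = bm_ract M (bm_ract M x a) b"
  using bm unfolding is_bimod_def Let_def by auto

lemma bladd: "x \<in> bm_car M \<Longrightarrow> bm_lact M (a + b) x = bm_add M (bm_lact M a x) (bm_lact M b x)"
  using bm unfolding is_bimod_def Let_def by auto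

lemma braadd: "x \<in> bm_car M \<Longrightarrow> bm_ract M x (a + b) = bm_add M (bm_ract M x a) (bm_ract M x b)"
  using bm unfolding is_bimod_def Let_def by auto

lemma bla_ad: "x \<in> bm_car M \<Longrightarrow> y \<in> bm_car M \<Longrightarrow> bm_lact M a (bm_add M x y) = bm_add M (bm_lact M a x) (bm_lact M a y)"
  using bm unfolding is_bimod_def Let_def by auto

lemma bra_ad: "x \<in> bm_car M \<Longrightarrow> y \<in> bm_car M \<Longrightarrow> bm_ract M (bm_add M x y) a = bm_add M (bm_ract M x a) (bm_ract M y a)"
  using bm unfolding is_bimod_def Let_def by auto

lemma blara: "x \<in> bm_car M \<Longrightarrow> bm_lact M a (bm_ract M x b) = bm_ract M (bm_lact M a x) b"
  using bm unfolding is_bimod_def Let_def by auto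

lemma bzr: "x \<in> bm_car M \<Longrightarrow> bm_add M x (bm_zero M) = x"
  using bcomm bzl bz by metis

lemma bcancel: assumes "x \<in> bm_car M" "bm_add M x x = x" shows "x = bm_zero M"
proof -
  have "bm_add M (bm_neg M x) (bm_add M x x) = bm_add M (bm_neg M x) x" using assms by simp
  then have "bm_add M (bm_add M (bm_neg M x) x) x = bm_zero M"
    using assms bassoc bneg binv by metis
  then show ?thesis using assms bzl binv by metis
qed

lemma blaz: "bm_lact M c (bm_zero M) = bm_zero M"
  using bcancel[of "bm_lact M c (bm_zero M)"] bla_ad[of "bm_zero M" "bm_zero M" c] bzl bz bla by metis

lemma braz: "bm_ract M (bm_zero M) c = bm_zero M"
  using bcancel[of "bm_ract M (bm_zero M) c"] bra_ad[of "bm_zero M" "bm_zero M" c] bzl bz bra by metis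

lemma bla0: "x \<in> bm_car M \<Longrightarrow> bm_lact M 0 x = bm_zero M"
  using bcancel[of "bm_lact M 0 x"] bladd[of x 0 0] bla by simp

end

context
  fixes e :: "complex \<Rightarrow> 'b::ring_1" and M :: "('b, 'x, 'z) bimod_scheme" and a
  assumes bm: "is_bimod e M" and op: "is_op M a"
begin

lemma op_basic:
  shows op_car: "\<And>x. x \<in> Xcar M \<Longrightarrow> a x \<in> Xcar M"
   and op_add: "\<And>b \<xi> c \<eta>. \<xi> \<in> bm_car M \<Longrightarrow> \<eta> \<in> bm_car M \<Longrightarrow>
        a (b + c, bm_add M \<xi> \<eta>) = (fst (a (b, \<xi>)) + fst (a (c, \<eta>)), bm_add M (snd (a (b, \<xi>))) (snd (a (c, \<eta>))))"
   and op_la: "\<And>c b \<xi>. \<xi> \<in> bm_car M \<Longrightarrow>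
        a (c * b, bm_lact M c \<xi>) = (c * fst (a (b, \<xi>)), bm_lact M c (snd (a (b, \<xi>))))"
   and op_ra: "\<And>c b \<xi>. \<xi> \<in> bm_car M \<Longrightarrow>
        a (b * c, bm_ract M \<xi> c) = (fst (a (b, \<xi>)) * c, bm_ract M (snd (a (b, \<xi>))) c)"
  using op unfolding is_op_def by blast+

lemma op_car2: "\<xi> \<in> bm_car M \<Longrightarrow> snd (a (b, \<xi>)) \<in> bm_car M"
  using op_car[of "(b,\<xi>)"] unfolding Xcar_def by auto

lemma op_zero: "a (0, bm_zero M) = (0, bm_zero M)"
proof -
  have h: "a (0 + 0, bm_add M (bm_zero M) (bm_zero M)) = (fst (a (0, bm_zero M)) + fst (a (0, bm_zero M)),
     bm_add M (snd (a (0, bm_zero M))) (snd (a (0, bm_zero M))))"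
    using op_add bz[OF bm] by blast
  have "bm_add M (bm_zero M) (bm_zero M) = bm_zero M" using bzl[OF bm] bz[OF bm] by blast
  then have h2: "a (0, bm_zero M) = (fst (a (0, bm_zero M)) + fst (a (0, bm_zero M)),
     bm_add M (snd (a (0, bm_zero M))) (snd (a (0, bm_zero M))))" using h by simp
  then have "fst (a (0, bm_zero M)) = 0"
    by (metis add_cancel_right_right fst_conv)
  moreover have "snd (a (0, bm_zero M)) = bm_zero M"
    using bcancel[OF bm, of "snd (a (0, bm_zero M))"] h2 op_car2 bz[OF bm] by (metis snd_conv)
  ultimately show ?thesis by (metis prod.collapse)
qed

lemma op_split: "\<xi> \<in> bm_car M \<Longrightarrow> a (b, \<xi>) =
   (fst (a (b, bm_zero M)) + fst (a (0, \<xi>)), bm_add M (snd (a (b, bm_zero M))) (snd (a (0, \<xi>))))"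
  using op_add[where b=b and c=0 and \<xi>="bm_zero M" and \<eta>=\<xi>] bz[OF bm] bzl[OF bm] by simp

lemma op_scal_l: "a (c, bm_zero M) = (c * fst (a (1, bm_zero M)), bm_lact M c (snd (a (1, bm_zero M))))"
  using op_la[where c=c and b=1 and \<xi>="bm_zero M"] bz[OF bm] blaz[OF bm] by simp

lemma op_scal_r: "a (c, bm_zero M) = (fst (a (1, bm_zero M)) * c, bm_ract M (snd (a (1, bm_zero M))) c)"
  using op_ra[where c=c and b=1 and \<xi>="bm_zero M"] bz[OF bm] braz[OF bm] by simp

lemma op_central: "c * fst (a (1, bm_zero M)) = fst (a (1, bm_zero M)) * c"
  using op_scal_l op_scal_r by (metis fst_conv)

lemma op_central2: "bm_lact M c (snd (a (1, bm_zero M))) = bm_ract M (snd (a (1, bm_zero M))) c"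
  using op_scal_l op_scal_r by (metis snd_conv)

lemma op_ra0: "\<xi> \<in> bm_car M \<Longrightarrow> a (0, bm_ract M \<xi> c) = (fst (a (0, \<xi>)) * c, bm_ract M (snd (a (0, \<xi>))) c)"
  using op_ra[where c=c and b=0 and \<xi>=\<xi>] by simp

end

lemma is_op_comp:
  assumes "is_op M a" "is_op M c"
  shows "is_op M (a \<circ> c)"
proof -
  have cc: "\<And>x. x \<in> Xcar M \<Longrightarrow> c x \<in> Xcar M" using assms(2) unfolding is_op_def by blast
  have ca: "\<And>x. x \<in> Xcar M \<Longrightarrow> a x \<in> Xcar M" using assms(1) unfolding is_op_def by blast
  have c2: "\<And>b \<xi>. \<xi> \<in> bm_car M \<Longrightarrow> snd (c (b, \<xi>)) \<in> bm_car M"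
  proof -
    fix b \<xi> assume "\<xi> \<in> bm_car M"
    then have "(b, \<xi>) \<in> Xcar M" unfolding Xcar_def by simp
    then have "c (b, \<xi>) \<in> Xcar M" using cc by blast
    then show "snd (c (b, \<xi>)) \<in> bm_car M" unfolding Xcar_def by (cases "c (b, \<xi>)") simp
  qed
  show ?thesis
    unfolding is_op_def
  proof (intro conjI allI impI ballI)
    fix x assume "x \<in> Xcar M" then show "(a \<circ> c) x \<in> Xcar M" using ca cc by simp
  next
    fix b \<xi> d \<eta> assume h: "\<xi> \<in> bm_car M" "\<eta> \<in> bm_car M"
    have "c (b + d, bm_add M \<xi> \<eta>) = (fst (c (b, \<xi>)) + fst (c (d, \<eta>)), bm_add M (snd (c (b, \<xi>))) (snd (c (d, \<eta>))))"
      using assms(2) h unfolding is_op_def by blast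
    moreover have "a (fst (c (b, \<xi>)) + fst (c (d, \<eta>)), bm_add M (snd (c (b, \<xi>))) (snd (c (d, \<eta>))))
       = (fst (a (c (b, \<xi>))) + fst (a (c (d, \<eta>))), bm_add M (snd (a (c (b, \<xi>)))) (snd (a (c (d, \<eta>)))))"
      using assms(1) c2[OF h(1)] c2[OF h(2)] unfolding is_op_def by simp
    ultimately show "(a \<circ> c) (b + d, bm_add M \<xi> \<eta>) = (fst ((a \<circ> c) (b, \<xi>)) + fst ((a \<circ> c) (d, \<eta>)),
          bm_add M (snd ((a \<circ> c) (b, \<xi>))) (snd ((a \<circ> c) (d, \<eta>))))" by simp
  next
    fix d b \<xi> assume h: "\<xi> \<in> bm_car M"
    have "c (d * b, bm_lact M d \<xi>) = (d * fst (c (b, \<xi>)), bm_lact M d (snd (c (b, \<xi>))))"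
      using assms(2) h unfolding is_op_def by blast
    moreover have "a (d * fst (c (b, \<xi>)), bm_lact M d (snd (c (b, \<xi>)))) = (d * fst (a (c (b, \<xi>))), bm_lact M d (snd (a (c (b, \<xi>)))))"
      using assms(1) c2[OF h] unfolding is_op_def by simp
    ultimately show "(a \<circ> c) (d * b, bm_lact M d \<xi>) = (d * fst ((a \<circ> c) (b, \<xi>)), bm_lact M d (snd ((a \<circ> c) (b, \<xi>))))"
      by simp
    have "c (b * d, bm_ract M \<xi> d) = (fst (c (b, \<xi>)) * d, bm_ract M (snd (c (b, \<xi>))) d)"
      using assms(2) h unfolding is_op_def by blast
    moreover have "a (fst (c (b, \<xi>)) * d, bm_ract M (snd (c (b, \<xi>))) d) = (fst (a (c (b, \<xi>))) * d, bm_ract M (snd (a (c (b, \<xi>)))) d)"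
      using assms(1) c2[OF h] unfolding is_op_def by simp
    ultimately show "(a \<circ> c) (b * d, bm_ract M \<xi> d) = (fst ((a \<circ> c) (b, \<xi>)) * d, bm_ract M (snd ((a \<circ> c) (b, \<xi>))) d)"
      by simp
  qed
qed

lemma is_op_id: "is_op M id"
  unfolding is_op_def by simp


section \<open>Words and relations\<close>

lemma lactw_Cons[simp]: "lactw Xo c (p # r) = (fst p, bm_lact (Xo (fst p)) c (snd p)) # r"
  by (simp add: lactw_def)

lemma dlt_app: "dlt w u = (if u = w then 1 else 0)"
  by (simp add: dlt_def)

lemma dlt_fin: "finite {u. dlt w u \<noteq> 0}"
  by (simp add: dlt_def)

lemma alt_nonempty: "alt_word Xo w \<Longrightarrow> w \<noteq> []"
  by (simp add: alt_word_def)

lemma alt_Cons: "alt_word Xo (p # r) \<longleftrightarrow> snd p \<in> bm_car (Xo (fst p)) \<and>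
   (r \<noteq> [] \<longrightarrow> alt_word Xo r \<and> fst p \<noteq> fst (hd r))"
proof
  assume H: "alt_word Xo (p # r)"
  have a: "\<forall>j. Suc j < length (p # r) \<longrightarrow> fst ((p # r) ! j) \<noteq> fst ((p # r) ! Suc j)"
   and b: "\<forall>q\<in>set (p # r). snd q \<in> bm_car (Xo (fst q))" using H unfolding alt_word_def by blast+
  show "snd p \<in> bm_car (Xo (fst p)) \<and> (r \<noteq> [] \<longrightarrow> alt_word Xo r \<and> fst p \<noteq> fst (hd r))"
  proof (intro conjI impI)
    show "snd p \<in> bm_car (Xo (fst p))" using b by simp
    assume r: "r \<noteq> []"
    show "alt_word Xo r" unfolding alt_word_def
    proof (intro conjI allI impI ballI)
      show "r \<noteq> []" by fact
      fix j assume "Suc j < length r"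
      then show "fst (r ! j) \<noteq> fst (r ! Suc j)" using a[rule_format, of "Suc j"] by simp
    next
      fix q assume "q \<in> set r" then show "snd q \<in> bm_car (Xo (fst q))" using b by simp
    qed
    show "fst p \<noteq> fst (hd r)" using a[rule_format, of 0] r by (simp add: hd_conv_nth)
  qed
next
  assume H: "snd p \<in> bm_car (Xo (fst p)) \<and> (r \<noteq> [] \<longrightarrow> alt_word Xo r \<and> fst p \<noteq> fst (hd r))"
  show "alt_word Xo (p # r)" unfolding alt_word_def
  proof (intro conjI allI impI ballI)
    show "p # r \<noteq> []" by simp
  next
    fix j assume j: "Suc j < length (p # r)"
    then have r: "r \<noteq> []" by auto
    then have ar: "alt_word Xo r" and hr: "fst p \<noteq> fst (hd r)" using H by auto
    show "fst ((p # r) ! j) \<noteq> fst ((p # r) ! Suc j)"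
    proof (cases j)
      case 0 then show ?thesis using hr r by (simp add: hd_conv_nth)
    next
      case (Suc j') then show ?thesis using ar j unfolding alt_word_def by simp
    qed
  next
    fix q assume "q \<in> set (p # r)"
    then show "snd q \<in> bm_car (Xo (fst q))" using H unfolding alt_word_def
      by (cases "q = p") auto
  qed
qed

lemma alt_single: "alt_word Xo [(l, \<xi>)] \<longleftrightarrow> \<xi> \<in> bm_car (Xo l)"
  by (simp add: alt_Cons)

lemma alt_upd: assumes "alt_word Xo w" "j < length w" "v \<in> bm_car (Xo (fst (w ! j)))"
  shows "alt_word Xo (w[j := (fst (w ! j), v)])"
proof -
  have f: "\<And>k. k < length w \<Longrightarrow> fst (w[j := (fst (w ! j), v)] ! k) = fst (w ! k)"
    by (case_tac "k = j") auto
  show ?thesis using assms unfolding alt_word_def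
  proof (intro conjI allI impI ballI)
    show "w[j := (fst (w ! j), v)] \<noteq> []" using assms(1) by (simp add: alt_word_def)
  next
    fix k assume "Suc k < length (w[j := (fst (w ! j), v)])"
    then show "fst (w[j := (fst (w ! j), v)] ! k) \<noteq> fst (w[j := (fst (w ! j), v)] ! Suc k)"
      using f[of k] f[of "Suc k"] assms(1) unfolding alt_word_def by simp
  next
    fix q assume "q \<in> set (w[j := (fst (w ! j), v)])"
    then have "q = (fst (w ! j), v) \<or> q \<in> set w" using set_update_subset_insert by fastforce
    then show "snd q \<in> bm_car (Xo (fst q))" using assms unfolding alt_word_def by auto
  qed
qed

lemma rs_gen_add: "alt_word Xo w \<Longrightarrow> j < length w \<Longrightarrow> \<xi> \<in> bm_car (Xo (fst (w ! j))) \<Longrightarrow> \<eta> \<in> bm_car (Xo (fst (w ! j)))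
  \<Longrightarrow> (\<lambda>u. dlt (w[j := (fst (w ! j), bm_add (Xo (fst (w ! j))) \<xi> \<eta>)]) u
            - dlt (w[j := (fst (w ! j), \<xi>)]) u - dlt (w[j := (fst (w ! j), \<eta>)]) u) \<in> rel_sub Xo"
  apply (rule rel_sub.gen) apply (unfold rel_gens_def) apply (rule UnI1) apply (rule CollectI)
  apply (rule exI[of _ w], rule exI[of _ j], rule exI[of _ \<xi>], rule exI[of _ \<eta>]) by simp

lemma rs_gen_bal: "alt_word Xo w \<Longrightarrow> Suc j < length w
  \<Longrightarrow> (\<lambda>u. dlt (w[j := (fst (w ! j), bm_ract (Xo (fst (w ! j))) (snd (w ! j)) b)]) u
            - dlt (w[Suc j := (fst (w ! Suc j), bm_lact (Xo (fst (w ! Suc j))) b (snd (w ! Suc j)))]) u) \<in> rel_sub Xo"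
  apply (rule rel_sub.gen) apply (unfold rel_gens_def) apply (rule UnI2) apply (rule CollectI)
  apply (rule exI[of _ w], rule exI[of _ j], rule exI[of _ b]) by simp

lemma rs_neg: "f \<in> rel_sub Xo \<Longrightarrow> (\<lambda>u. - f u) \<in> rel_sub Xo"
  using rel_sub.diff[OF rel_sub.zero, of f] by simp

lemma rs_add: "f \<in> rel_sub Xo \<Longrightarrow> g \<in> rel_sub Xo \<Longrightarrow> (\<lambda>u. f u + g u) \<in> rel_sub Xo"
proof -
  assume f: "f \<in> rel_sub Xo" and g: "g \<in> rel_sub Xo"
  have "(\<lambda>u. f u - (- g u)) \<in> rel_sub Xo" by (rule rel_sub.diff[OF f rs_neg[OF g]])
  then show ?thesis by simp
qed

lemma rs_diff: "f \<in> rel_sub Xo \<Longrightarrow> g \<in> rel_sub Xo \<Longrightarrow> (\<lambda>u. f u - g u) \<in> rel_sub Xo"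
  by (rule rel_sub.diff)

lemma rs_zero: "(\<lambda>u. 0) \<in> rel_sub Xo"
  by (rule rel_sub.zero)

lemma rs_cong: "f \<in> rel_sub Xo \<Longrightarrow> (\<And>u. f u = g u) \<Longrightarrow> g \<in> rel_sub Xo"
proof -
  assume "f \<in> rel_sub Xo" "\<And>u. f u = g u"
  moreover then have "f = g" by auto
  ultimately show ?thesis by simp
qed

lemma rs_sum: "finite I \<Longrightarrow> (\<And>i. i \<in> I \<Longrightarrow> f i \<in> rel_sub Xo) \<Longrightarrow> (\<lambda>u. \<Sum>i\<in>I. f i u) \<in> rel_sub Xo"
proof (induction I rule: finite_induct)
  case empty then show ?case using rs_zero by simp
next
  case (insert x F)
  have a: "f x \<in> rel_sub Xo" using insert.prems by simp
  have b: "(\<lambda>u. \<Sum>i\<in>F. f i u) \<in> rel_sub Xo" using insert.IH insert.prems by simp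
  have "(\<lambda>u. f x u + (\<Sum>i\<in>F. f i u)) \<in> rel_sub Xo" using rs_add[OF a b] .
  then show ?case using insert by simp
qed

lemma rs_smul_nat: "f \<in> rel_sub Xo \<Longrightarrow> (\<lambda>u. int n * f u) \<in> rel_sub Xo"
proof (induction n)
  case 0 then show ?case using rs_zero by simp
next
  case (Suc n)
  have "(\<lambda>u. f u + int n * f u) \<in> rel_sub Xo" using rs_add[OF Suc.prems Suc.IH[OF Suc.prems]] .
  then show ?case by (simp add: algebra_simps)
qed

lemma rs_smul: assumes f: "f \<in> rel_sub Xo" shows "(\<lambda>u. (n::int) * f u) \<in> rel_sub Xo"
proof (cases "n \<ge> 0")
  case True
  then obtain k where "n = int k" using nonneg_int_cases by blast
  then show ?thesis using rs_smul_nat f by auto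
next
  case False
  define k where "k = nat (- n)"
  have "n = - int k" using False k_def by simp
  have "(\<lambda>u. - (int k * f u)) \<in> rel_sub Xo" using rs_neg[OF rs_smul_nat[OF f]] .
  then show ?thesis using \<open>n = - int k\<close> by simp
qed

lemma dlt3_fin: "finite {u. dlt a u - dlt b u - dlt c u \<noteq> 0}"
  by (rule finite_subset[of _ "{a,b,c}"]) (auto simp: dlt_def)

lemma dlt2_fin: "finite {u. dlt a u - dlt b u \<noteq> 0}"
  by (rule finite_subset[of _ "{a,b}"]) (auto simp: dlt_def)

lemma rs_fin: "f \<in> rel_sub Xo \<Longrightarrow> finite {u. f u \<noteq> 0}"
proof (induction rule: rel_sub.induct)
  case (gen f)
  then show ?case unfolding rel_gens_def
    using dlt3_fin dlt2_fin by (elim UnE CollectE exE conjE) simp_all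
next
  case zero then show ?case by simp
next
  case (diff f g)
  have "{u. f u - g u \<noteq> 0} \<subseteq> {u. f u \<noteq> 0} \<union> {u. g u \<noteq> 0}" by auto
  then show ?case using diff.IH finite_subset by blast
qed

lemma cls_eq: assumes "(\<lambda>u. f u - g u) \<in> rel_sub Xo" shows "cls Xo f = cls Xo g"
proof -
  have "(\<lambda>u. g u - f u) \<in> rel_sub Xo" using rs_neg[OF assms] by simp
  have 1: "(\<lambda>u. g u - h u) \<in> rel_sub Xo" if "(\<lambda>u. f u - h u) \<in> rel_sub Xo" for h
    using rs_diff[OF that assms] by simp
  have 2: "(\<lambda>u. f u - h u) \<in> rel_sub Xo" if "(\<lambda>u. g u - h u) \<in> rel_sub Xo" for h
    using rs_add[OF that assms] by simp
  show ?thesis unfolding cls_def using 1 2 by blast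
qed

lemma rep_spec: assumes "f \<in> ZW Xo"
  shows "rep Xo (cls Xo f) \<in> ZW Xo" "(\<lambda>u. f u - rep Xo (cls Xo f) u) \<in> rel_sub Xo"
proof -
  have ex: "\<exists>g. g \<in> ZW Xo \<and> cls Xo f = cls Xo g" using assms by blast
  have r: "rep Xo (cls Xo f) \<in> ZW Xo \<and> cls Xo f = cls Xo (rep Xo (cls Xo f))"
    unfolding rep_def using someI_ex[OF ex] by blast
  then show "rep Xo (cls Xo f) \<in> ZW Xo" by blast
  define R where "R = rep Xo (cls Xo f)"
  have e: "cls Xo f = cls Xo R" "R \<in> ZW Xo" using r R_def by auto
  have "R \<in> cls Xo R" using e(2) rs_zero unfolding cls_def by simp
  then have "R \<in> cls Xo f" using e by simp
  then have "(\<lambda>u. f u - R u) \<in> rel_sub Xo" unfolding cls_def by simp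
  then show "(\<lambda>u. f u - rep Xo (cls Xo f) u) \<in> rel_sub Xo" using R_def by simp
qed


section \<open>Linear extension\<close>

definition lin :: "(('i \<times> 'x) list \<Rightarrow> 'c::ring_1) \<Rightarrow> (('i \<times> 'x) list \<Rightarrow> int) \<Rightarrow> 'c" where
  "lin X g = (\<Sum>w\<in>{w. g w \<noteq> 0}. of_int (g w) * X w)"

lemma lin_eq: assumes "finite F" "{w. g w \<noteq> 0} \<subseteq> F"
  shows "lin X g = (\<Sum>w\<in>F. of_int (g w) * X w)"
  unfolding lin_def by (rule sum.mono_neutral_left[OF assms]) auto

lemma lin_add: assumes "finite {w. g1 w \<noteq> 0}" "finite {w. g2 w \<noteq> 0}"
  shows "lin X (\<lambda>w. g1 w + g2 w) = lin X g1 + lin X g2"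
proof -
  let ?F = "{w. g1 w \<noteq> 0} \<union> {w. g2 w \<noteq> 0}"
  have f: "finite ?F" using assms by simp
  have "lin X (\<lambda>w. g1 w + g2 w) = (\<Sum>w\<in>?F. of_int (g1 w + g2 w) * X w)" by (rule lin_eq[OF f]) auto
  also have "\<dots> = (\<Sum>w\<in>?F. of_int (g1 w) * X w) + (\<Sum>w\<in>?F. of_int (g2 w) * X w)"
    by (simp add: distrib_right sum.distrib)
  also have "\<dots> = lin X g1 + lin X g2" using lin_eq[OF f, of g1 X] lin_eq[OF f, of g2 X] by auto
  finally show ?thesis .
qed

lemma lin_neg: "lin X (\<lambda>w. - g w) = - lin X g"
  unfolding lin_def by (simp add: sum_negf)

lemma lin_diff: assumes "finite {w. g1 w \<noteq> 0}" "finite {w. g2 w \<noteq> 0}"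
  shows "lin X (\<lambda>w. g1 w - g2 w) = lin X g1 - lin X g2"
proof -
  have f2: "finite {w. - g2 w \<noteq> 0}" using assms(2) by simp
  have "lin X (\<lambda>w. g1 w + (- g2 w)) = lin X g1 + lin X (\<lambda>w. - g2 w)" by (rule lin_add[OF assms(1) f2])
  then show ?thesis using lin_neg[of X g2] by simp
qed

lemma lin_smul: assumes "finite {w. g w \<noteq> 0}"
  shows "lin X (\<lambda>w. n * g w) = of_int n * lin X g"
proof -
  have "lin X (\<lambda>w. n * g w) = (\<Sum>w\<in>{w. g w \<noteq> 0}. of_int (n * g w) * X w)"
    by (rule lin_eq[OF assms]) auto
  also have "\<dots> = of_int n * lin X g" unfolding lin_def
    by (simp add: sum_distrib_left mult.assoc)
  finally show ?thesis .
qed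

lemma lin_dlt: "lin X (dlt u) = X u"
proof -
  have "lin X (dlt u) = (\<Sum>w\<in>{u}. of_int (dlt u w) * X w)" by (rule lin_eq) (auto simp: dlt_def)
  then show ?thesis by (simp add: dlt_def)
qed

lemma lin_zero: "lin X (\<lambda>w. 0) = 0"
  unfolding lin_def by simp

lemma lin_cong: "(\<And>w. g w \<noteq> 0 \<Longrightarrow> X w = Y w) \<Longrightarrow> lin X g = lin Y g"
  unfolding lin_def by (rule sum.cong) auto

lemma lin_zero_if: "(\<And>w. g w \<noteq> 0 \<Longrightarrow> X w = 0) \<Longrightarrow> lin X g = 0"
  unfolding lin_def by (rule sum.neutral) auto

lemma fin_sum_supp: assumes "finite I" "\<And>i. i \<in> I \<Longrightarrow> finite {w. g i w \<noteq> (0::int)}"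
  shows "finite {w. (\<Sum>i\<in>I. g i w) \<noteq> 0}"
proof -
  have "{w. (\<Sum>i\<in>I. g i w) \<noteq> 0} \<subseteq> (\<Union>i\<in>I. {w. g i w \<noteq> 0})"
  proof
    fix w assume "w \<in> {w. (\<Sum>i\<in>I. g i w) \<noteq> 0}"
    then have "(\<Sum>i\<in>I. g i w) \<noteq> 0" by simp
    then obtain i where "i \<in> I" "g i w \<noteq> 0" by (meson sum.neutral)
    then show "w \<in> (\<Union>i\<in>I. {w. g i w \<noteq> 0})" by blast
  qed
  then show ?thesis using assms finite_subset by blast
qed

lemma lin_sum: assumes "finite I" "\<And>i. i \<in> I \<Longrightarrow> finite {w. g i w \<noteq> 0}"
  shows "lin X (\<lambda>w. \<Sum>i\<in>I. g i w) = (\<Sum>i\<in>I. lin X (g i))"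
  using assms
proof (induction I rule: finite_induct)
  case empty then show ?case by (simp add: lin_zero)
next
  case (insert x F)
  have a: "finite {w. g x w \<noteq> 0}" using insert.prems by simp
  have b: "finite {w. (\<Sum>i\<in>F. g i w) \<noteq> 0}" by (rule fin_sum_supp[OF insert.hyps(1)]) (use insert.prems in simp)
  have "lin X (\<lambda>w. \<Sum>i\<in>insert x F. g i w) = lin X (\<lambda>w. g x w + (\<Sum>i\<in>F. g i w))"
    using insert.hyps by simp
  also have "\<dots> = lin X (g x) + lin X (\<lambda>w. \<Sum>i\<in>F. g i w)" by (rule lin_add[OF a b])
  also have "\<dots> = lin X (g x) + (\<Sum>i\<in>F. lin X (g i))" using insert.IH insert.prems by simp
  finally show ?case using insert.hyps by simp
qed

lemma lin_supp: "lin (\<lambda>w. Y w u) g \<noteq> 0 \<Longrightarrow> \<exists>w. g w \<noteq> 0 \<and> Y w u \<noteq> 0"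
  using lin_zero_if[of g "\<lambda>w. Y w u"] by blast

lemma lin3: "lin X (\<lambda>u. dlt a u - dlt b u - dlt c u) = X a - X b - X c"
proof -
  have f: "finite {u. dlt a u - dlt b u \<noteq> 0}" by (rule dlt2_fin)
  have "lin X (\<lambda>u. dlt a u - dlt b u - dlt c u) = lin X (\<lambda>u. dlt a u - dlt b u) - lin X (dlt c)"
    by (simp add: lin_diff[OF f dlt_fin])
  also have "\<dots> = X a - X b - X c" by (simp add: lin_diff[OF dlt_fin dlt_fin] lin_dlt)
  finally show ?thesis .
qed

lemma lin2: "lin X (\<lambda>u. dlt a u - dlt b u) = X a - X b"
  by (simp add: lin_diff[OF dlt_fin dlt_fin] lin_dlt)

lemma WDf: assumes "\<And>h. h \<in> rel_gens Xo \<Longrightarrow> lin X h = 0" "h \<in> rel_sub Xo"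
  shows "lin X h = 0"
  using assms(2)
proof (induction rule: rel_sub.induct)
  case (gen f) then show ?case using assms(1) by blast
next
  case zero then show ?case by (simp add: lin_zero)
next
  case (diff f g) then show ?case by (simp add: lin_diff[OF rs_fin[OF diff.hyps(1)] rs_fin[OF diff.hyps(2)]])
qed

lemma WDs: assumes "\<And>h. h \<in> rel_gens Xo \<Longrightarrow> (\<lambda>u. lin (\<lambda>w. Y w u) h) \<in> rel_sub Xo" "h \<in> rel_sub Xo"
  shows "(\<lambda>u. lin (\<lambda>w. Y w u) h) \<in> rel_sub Xo"
  using assms(2)
proof (induction rule: rel_sub.induct)
  case (gen f) then show ?case using assms(1) by blast
next
  case zero then show ?case by (simp add: lin_zero rs_zero)
next
  case (diff f g)
  have "(\<lambda>u. lin (\<lambda>w. Y w u) f - lin (\<lambda>w. Y w u) g) \<in> rel_sub Xo" using rs_diff[OF diff.IH] .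
  then show ?case by (simp add: lin_diff[OF rs_fin[OF diff.hyps(1)] rs_fin[OF diff.hyps(2)]])
qed

lemma ZW_fin: "f \<in> ZW Xo \<Longrightarrow> finite {w. f w \<noteq> 0}"
  by (simp add: ZW_def)

lemma ZW_alt: "f \<in> ZW Xo \<Longrightarrow> f w \<noteq> 0 \<Longrightarrow> alt_word Xo w"
  by (simp add: ZW_def)

lemma ZW_dlt: "alt_word Xo w \<Longrightarrow> dlt w \<in> ZW Xo"
  unfolding ZW_def using dlt_fin by (auto simp: dlt_def)

lemma ZW_zero: "(\<lambda>u. 0) \<in> ZW Xo"
  unfolding ZW_def by simp

lemma ZW_add: assumes "f \<in> ZW Xo" "g \<in> ZW Xo" shows "(\<lambda>u. f u + g u) \<in> ZW Xo"
proof -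
  have "{w. f w + g w \<noteq> 0} \<subseteq> {w. f w \<noteq> 0} \<union> {w. g w \<noteq> 0}" by auto
  then have "finite {w. f w + g w \<noteq> 0}" using finite_subset finite_UnI[OF ZW_fin[OF assms(1)] ZW_fin[OF assms(2)]] by blast
  moreover have "alt_word Xo w" if "f w + g w \<noteq> 0" for w
  proof (cases "f w = 0")
    case True then show ?thesis using that ZW_alt[OF assms(2)] by simp
  next
    case False then show ?thesis using ZW_alt[OF assms(1)] by simp
  qed
  ultimately show ?thesis unfolding ZW_def by blast
qed

lemma ZW_lin: assumes "g \<in> ZW Xo" "\<And>w. g w \<noteq> 0 \<Longrightarrow> Y w \<in> ZW Xo"
  shows "(\<lambda>u. lin (\<lambda>w. Y w u) g) \<in> ZW Xo"
proof -
  have sub: "{u. lin (\<lambda>w. Y w u) g \<noteq> 0} \<subseteq> (\<Union>w\<in>{w. g w \<noteq> 0}. {u. Y w u \<noteq> 0})"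
  proof
    fix u assume "u \<in> {u. lin (\<lambda>w. Y w u) g \<noteq> 0}"
    then obtain w where "g w \<noteq> 0" "Y w u \<noteq> 0" using lin_supp[of Y u g] by auto
    then show "u \<in> (\<Union>w\<in>{w. g w \<noteq> 0}. {u. Y w u \<noteq> 0})" by blast
  qed
  have "finite (\<Union>w\<in>{w. g w \<noteq> 0}. {u. Y w u \<noteq> 0})"
    using ZW_fin[OF assms(1)] ZW_fin[OF assms(2)] by blast
  then have "finite {u. lin (\<lambda>w. Y w u) g \<noteq> 0}" using sub finite_subset by blast
  moreover have "alt_word Xo u" if nz: "lin (\<lambda>w. Y w u) g \<noteq> 0" for u
  proof -
    obtain w where "g w \<noteq> 0" "Y w u \<noteq> 0" using lin_supp[of Y u g, OF nz] by auto
    then show ?thesis using ZW_alt[OF assms(2)] by blast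
  qed
  ultimately show ?thesis unfolding ZW_def by blast
qed




lemma rs_comb3: "(\<lambda>u. A1 u - A2 u - A3 u) \<in> rel_sub Xo \<Longrightarrow> (\<lambda>u. B1 u - B2 u - B3 u) \<in> rel_sub Xo \<Longrightarrow>
   (\<lambda>u. (A1 u + B1 u) - (A2 u + B2 u) - (A3 u + B3 u)) \<in> rel_sub Xo"
  by (rule rs_cong[OF rs_add]) (assumption, assumption, simp add: algebra_simps)

lemma rs_comb2: "(\<lambda>u. A1 u - A2 u) \<in> rel_sub Xo \<Longrightarrow> (\<lambda>u. B1 u - B2 u) \<in> rel_sub Xo \<Longrightarrow>
   (\<lambda>u. (A1 u + B1 u) - (A2 u + B2 u)) \<in> rel_sub Xo"
  by (rule rs_cong[OF rs_add]) (assumption, assumption, simp add: algebra_simps)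

lemma rs_comb2': "(\<lambda>u. B1 u - B2 u) \<in> rel_sub Xo \<Longrightarrow>
   (\<lambda>u. (A u + B1 u) - (A u + B2 u)) \<in> rel_sub Xo"
  by (rule rs_cong) (assumption, simp add: algebra_simps)

lemma fst_hd_upd: "w \<noteq> [] \<Longrightarrow> fst (hd (w[j := (fst (w ! j), v)])) = fst (hd w)"
  by (cases w; cases j) auto

locale fpc =
  fixes e :: "complex \<Rightarrow> 'b::ring_1" and Xo :: "'i \<Rightarrow> ('b, 'x, 'z) bimod_scheme"
  assumes bim: "\<And>l. is_bimod e (Xo l)"
begin

lemma alt_lactw: "alt_word Xo w \<Longrightarrow> alt_word Xo (lactw Xo c w)"
  by (cases w) (auto simp: alt_Cons bla[OF bim] dest: alt_nonempty)

lemma alt_prefix: "alt_word Xo w \<Longrightarrow> fst (hd w) \<noteq> l \<Longrightarrow> s \<in> bm_car (Xo l) \<Longrightarrow> alt_word Xo ((l, s) # w)"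
  by (simp add: alt_Cons alt_nonempty)

lemma alt_tl: "alt_word Xo (p # r) \<Longrightarrow> r \<noteq> [] \<Longrightarrow> alt_word Xo r \<and> fst p \<noteq> fst (hd r)"
  by (simp add: alt_Cons)

lemma alt_hd: "alt_word Xo (p # r) \<Longrightarrow> snd p \<in> bm_car (Xo (fst p))"
  by (simp add: alt_Cons)

lemma lw_neq: "w \<noteq> [] \<Longrightarrow> fst (hd w) \<noteq> l \<Longrightarrow> lam_word Xo l a w =
   (0, \<lambda>u. dlt (lactw Xo (fst (a (1, bm_zero (Xo l)))) w) u + dlt ((l, snd (a (1, bm_zero (Xo l)))) # w) u)"
  by (cases w) (simp_all add: lam_word_def Let_def)

lemma lw_single: "lam_word Xo l a [(l, \<xi>)] = (fst (a (0, \<xi>)), dlt [(l, snd (a (0, \<xi>)))])"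
  by (simp add: lam_word_def Let_def)

lemma lw_cons: "r \<noteq> [] \<Longrightarrow> lam_word Xo l a ((l, \<xi>) # r) =
   (0, \<lambda>u. dlt (lactw Xo (fst (a (0, \<xi>))) r) u + dlt ((l, snd (a (0, \<xi>))) # r) u)"
  by (simp add: lam_word_def Let_def)

lemma lw_fst: "w \<noteq> [] \<Longrightarrow> fst (lam_word Xo l a w) \<noteq> 0 \<Longrightarrow> \<exists>\<xi>. w = [(l, \<xi>)]"
proof -
  assume w: "w \<noteq> []" and nz: "fst (lam_word Xo l a w) \<noteq> 0"
  obtain p r where pr: "w = p # r" using w by (cases w) auto
  show ?thesis
  proof (cases "fst p = l")
    case False then show ?thesis using nz pr lw_neq[of w l a] by simp
  next
    case True
    then have p: "p = (l, snd p)" by (cases p) auto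
    show ?thesis
    proof (cases "r = []")
      case True then show ?thesis using pr p by blast
    next
      case False then show ?thesis using nz pr p lw_cons[of r l a "snd p"] by simp
    qed
  qed
qed

lemma lw_ZW: assumes op: "is_op (Xo l) a" and w: "alt_word Xo w"
  shows "snd (lam_word Xo l a w) \<in> ZW Xo"
proof -
  obtain p r where pr: "w = p # r" using alt_nonempty[OF w] by (cases w) auto
  have s1: "snd (a (1, bm_zero (Xo l))) \<in> bm_car (Xo l)" using op_car2[OF bim op] bz[OF bim] by blast
  show ?thesis
  proof (cases "fst p = l")
    case False
    have "snd (lam_word Xo l a w) = (\<lambda>u. dlt (lactw Xo (fst (a (1, bm_zero (Xo l)))) w) u + dlt ((l, snd (a (1, bm_zero (Xo l)))) # w) u)"
      using lw_neq[of w l a] pr False by simp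
    moreover have h: "alt_word Xo ((l, snd (a (1, bm_zero (Xo l)))) # w)" using alt_prefix[OF w] pr False s1 by simp
    ultimately show ?thesis using ZW_add[OF ZW_dlt[OF alt_lactw[OF w]] ZW_dlt[OF h]] by simp
  next
    case True
    then have p: "p = (l, snd p)" by (cases p) auto
    have sp: "snd p \<in> bm_car (Xo l)" using alt_hd[of p r] w pr True by simp
    have s2: "snd (a (0, snd p)) \<in> bm_car (Xo l)" using op_car2[OF bim op sp] .
    show ?thesis
    proof (cases "r = []")
      case True
      then show ?thesis using pr p lw_single[of l a "snd p"] ZW_dlt alt_single s2 by (metis snd_conv)
    next
      case False
      have ar: "alt_word Xo r" "fst (hd r) \<noteq> l" using alt_tl[of p r] w pr False True by auto
      have "snd (lam_word Xo l a w) = (\<lambda>u. dlt (lactw Xo (fst (a (0, snd p))) r) u + dlt ((l, snd (a (0, snd p))) # r) u)"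
        using lw_cons[OF False, of l a "snd p"] pr p by (metis snd_conv)
      moreover have h: "alt_word Xo ((l, snd (a (0, snd p))) # r)" using alt_prefix[OF ar s2] .
      ultimately show ?thesis using ZW_add[OF ZW_dlt[OF alt_lactw[OF ar(1)]] ZW_dlt[OF h]] by simp
    qed
  qed
qed

lemma LA: assumes w: "alt_word Xo w" and j: "j < length w"
    and x: "\<xi> \<in> bm_car (Xo (fst (w ! j)))" "\<eta> \<in> bm_car (Xo (fst (w ! j)))"
  shows "(\<lambda>u. dlt (lactw Xo c (w[j := (fst (w ! j), bm_add (Xo (fst (w ! j))) \<xi> \<eta>)])) u
     - dlt (lactw Xo c (w[j := (fst (w ! j), \<xi>)])) u - dlt (lactw Xo c (w[j := (fst (w ! j), \<eta>)])) u) \<in> rel_sub Xo"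
proof -
  obtain p r where pr: "w = p # r" using alt_nonempty[OF w] by (cases w) auto
  show ?thesis
  proof (cases j)
    case 0
    let ?i = "fst p"
    have xx: "\<xi> \<in> bm_car (Xo ?i)" "\<eta> \<in> bm_car (Xo ?i)" using x pr 0 by auto
    have a: "alt_word Xo ((?i, bm_lact (Xo ?i) c \<xi>) # r)"
      using w pr xx bla[OF bim] by (simp add: alt_Cons)
    have "(\<lambda>u. dlt ((?i, bm_add (Xo ?i) (bm_lact (Xo ?i) c \<xi>) (bm_lact (Xo ?i) c \<eta>)) # r) u
        - dlt ((?i, bm_lact (Xo ?i) c \<xi>) # r) u - dlt ((?i, bm_lact (Xo ?i) c \<eta>) # r) u) \<in> rel_sub Xo"
      using rs_gen_add[where Xo=Xo and w = "(?i, bm_lact (Xo ?i) c \<xi>) # r" and j = 0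
          and \<xi> = "bm_lact (Xo ?i) c \<xi>" and \<eta> = "bm_lact (Xo ?i) c \<eta>"] a xx bla[OF bim] by simp
    then show ?thesis using pr 0 bla_ad[OF bim] xx by simp
  next
    case (Suc j')
    have a: "alt_word Xo (lactw Xo c w)" by (rule alt_lactw[OF w])
    have j': "Suc j' < length (lactw Xo c w)" using j Suc pr by simp
    have "fst (lactw Xo c w ! Suc j') = fst (w ! j)" using pr Suc by simp
    then show ?thesis
      using rs_gen_add[OF a j', where \<xi> = \<xi> and \<eta> = \<eta>] x pr Suc by simp
  qed
qed

lemma LB: assumes w: "alt_word Xo w" and j: "Suc j < length w"
  shows "(\<lambda>u. dlt (lactw Xo c (w[j := (fst (w ! j), bm_ract (Xo (fst (w ! j))) (snd (w ! j)) b)])) u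
     - dlt (lactw Xo c (w[Suc j := (fst (w ! Suc j), bm_lact (Xo (fst (w ! Suc j))) b (snd (w ! Suc j)))])) u) \<in> rel_sub Xo"
proof -
  obtain p r where pr: "w = p # r" using alt_nonempty[OF w] by (cases w) auto
  show ?thesis
  proof (cases j)
    case 0
    obtain q r' where qr: "r = q # r'" using j pr 0 by (cases r) auto
    let ?i = "fst p"
    have sp: "snd p \<in> bm_car (Xo ?i)" using w pr by (simp add: alt_Cons)
    have a: "alt_word Xo ((?i, bm_lact (Xo ?i) c (snd p)) # q # r')"
      using w pr qr sp bla[OF bim] by (simp add: alt_Cons)
    have "(\<lambda>u. dlt ((?i, bm_ract (Xo ?i) (bm_lact (Xo ?i) c (snd p)) b) # q # r') u
        - dlt ((?i, bm_lact (Xo ?i) c (snd p)) # (fst q, bm_lact (Xo (fst q)) b (snd q)) # r') u) \<in> rel_sub Xo"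
      using rs_gen_bal[where Xo=Xo and w = "(?i, bm_lact (Xo ?i) c (snd p)) # q # r'" and j = 0 and b = b] a by simp
    then show ?thesis using pr qr 0 blara[OF bim sp] by simp
  next
    case (Suc j')
    have a: "alt_word Xo (lactw Xo c w)" by (rule alt_lactw[OF w])
    have j': "Suc (Suc j') < length (lactw Xo c w)" using j Suc pr by simp
    show ?thesis
      using rs_gen_bal[OF a j', where b = b] pr Suc by simp
  qed
qed

lemma ADD_CASE: assumes op: "is_op (Xo l) a" and w: "alt_word Xo w" and j: "j < length w"
    and x: "\<xi> \<in> bm_car (Xo (fst (w ! j)))" "\<eta> \<in> bm_car (Xo (fst (w ! j)))"
  defines "w1 \<equiv> w[j := (fst (w ! j), bm_add (Xo (fst (w ! j))) \<xi> \<eta>)]"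
    and "w2 \<equiv> w[j := (fst (w ! j), \<xi>)]" and "w3 \<equiv> w[j := (fst (w ! j), \<eta>)]"
  shows "fst (lam_word Xo l a w1) - fst (lam_word Xo l a w2) - fst (lam_word Xo l a w3) = 0
    \<and> (\<lambda>u. snd (lam_word Xo l a w1) u - snd (lam_word Xo l a w2) u - snd (lam_word Xo l a w3) u) \<in> rel_sub Xo"
proof -
  obtain p r where pr: "w = p # r" using alt_nonempty[OF w] by (cases w) auto
  let ?c1 = "fst (a (1, bm_zero (Xo l)))" and ?s1 = "snd (a (1, bm_zero (Xo l)))"
  have s1: "?s1 \<in> bm_car (Xo l)" using op_car2[OF bim op] bz[OF bim] by blast
  show ?thesis
  proof (cases "fst p = l")
    case False
    have ne: "w \<noteq> []" "fst (hd w) \<noteq> l" using pr False by auto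
    have hd: "\<And>v. fst (hd (w[j := (fst (w ! j), v)])) = fst (hd w)" using fst_hd_upd[OF ne(1)] by blast
    have ne': "\<And>v. w[j := (fst (w ! j), v)] \<noteq> []" using ne(1) by simp
    have e: "\<And>v. lam_word Xo l a (w[j := (fst (w ! j), v)]) = (0, \<lambda>u. dlt (lactw Xo ?c1 (w[j := (fst (w ! j), v)])) u
        + dlt ((l, ?s1) # (w[j := (fst (w ! j), v)])) u)"
      using lw_neq[OF ne'] hd ne(2) by simp
    note H1 = LA[OF w j x, where c = ?c1]
    have a2: "alt_word Xo ((l, ?s1) # w)" using alt_prefix[OF w ne(2) s1] .
    note H2 = rs_gen_add[OF a2, where j = "Suc j" and \<xi> = \<xi> and \<eta> = \<eta>]
    have H2': "(\<lambda>u. dlt ((l, ?s1) # w1) u - dlt ((l, ?s1) # w2) u - dlt ((l, ?s1) # w3) u) \<in> rel_sub Xo"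
      using H2 j x unfolding w1_def w2_def w3_def by simp
    show ?thesis using rs_comb3[OF H1 H2'] unfolding w1_def w2_def w3_def e by simp
  next
    case True
    then have p: "p = (l, snd p)" by (cases p) auto
    show ?thesis
    proof (cases j)
      case 0
      have xl: "\<xi> \<in> bm_car (Xo l)" "\<eta> \<in> bm_car (Xo l)" using x pr 0 True by auto
      have sp: "snd (a (0, \<xi>)) \<in> bm_car (Xo l)" "snd (a (0, \<eta>)) \<in> bm_car (Xo l)"
        using op_car2[OF bim op] xl by auto
      have aadd: "a (0, bm_add (Xo l) \<xi> \<eta>) = (fst (a (0, \<xi>)) + fst (a (0, \<eta>)), bm_add (Xo l) (snd (a (0, \<xi>))) (snd (a (0, \<eta>))))"
        using op_add[OF bim op xl, of 0 0] by simp
      have ws: "w1 = (l, bm_add (Xo l) \<xi> \<eta>) # r" "w2 = (l, \<xi>) # r" "w3 = (l, \<eta>) # r"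
        unfolding w1_def w2_def w3_def using pr 0 True by simp_all
      show ?thesis
      proof (cases "r = []")
        case True
        have a1: "alt_word Xo [(l, snd (a (0, \<xi>)))]" by (simp add: alt_single sp)
        note H = rs_gen_add[OF a1, where j = 0 and \<xi> = "snd (a (0, \<xi>))" and \<eta> = "snd (a (0, \<eta>))"]
        show ?thesis using H sp unfolding ws True by (simp add: lw_single aadd)
      next
        case False
        obtain q r'' where qr: "r = q # r''" using False by (cases r) auto
        have ar: "alt_word Xo r" "fst (hd r) \<noteq> l" using alt_tl[of p r] w pr False True by auto
        have sq: "snd q \<in> bm_car (Xo (fst q))" using ar qr alt_hd by blast
        let ?f2 = "fst (a (0, \<xi>))" and ?f3 = "fst (a (0, \<eta>))"
        have a1: "alt_word Xo ((fst q, bm_lact (Xo (fst q)) ?f2 (snd q)) # r'')"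
          using ar(1) qr sq bla[OF bim] by (simp add: alt_Cons)
        note H1 = rs_gen_add[OF a1, where j = 0 and \<xi> = "bm_lact (Xo (fst q)) ?f2 (snd q)" and \<eta> = "bm_lact (Xo (fst q)) ?f3 (snd q)"]
        have H1': "(\<lambda>u. dlt (lactw Xo (?f2 + ?f3) r) u - dlt (lactw Xo ?f2 r) u - dlt (lactw Xo ?f3 r) u) \<in> rel_sub Xo"
          using H1 sq bla[OF bim] bladd[OF bim sq] unfolding qr by simp
        have a2: "alt_word Xo ((l, snd (a (0, \<xi>))) # r)" using alt_prefix[OF ar sp(1)] .
        note H2 = rs_gen_add[OF a2, where j = 0 and \<xi> = "snd (a (0, \<xi>))" and \<eta> = "snd (a (0, \<eta>))"]
        have H2': "(\<lambda>u. dlt ((l, bm_add (Xo l) (snd (a (0, \<xi>))) (snd (a (0, \<eta>)))) # r) u - dlt ((l, snd (a (0, \<xi>))) # r) u - dlt ((l, snd (a (0, \<eta>))) # r) u) \<in> rel_sub Xo"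
          using H2 sp by simp
        show ?thesis using rs_comb3[OF H1' H2'] unfolding ws by (simp add: lw_cons[OF False] aadd)
      qed
    next
      case (Suc j')
      have rne: "r \<noteq> []" using j pr Suc by auto
      have ar: "alt_word Xo r" "fst (hd r) \<noteq> l" using alt_tl[of p r] w pr rne True by auto
      have j': "j' < length r" using j pr Suc by simp
      have x': "\<xi> \<in> bm_car (Xo (fst (r ! j')))" "\<eta> \<in> bm_car (Xo (fst (r ! j')))" using x pr Suc by auto
      let ?f = "fst (a (0, snd p))" and ?s = "snd (a (0, snd p))"
      have sp: "snd p \<in> bm_car (Xo l)" using w pr True alt_hd by fastforce
      have ss: "?s \<in> bm_car (Xo l)" using op_car2[OF bim op sp] .
      have ws: "w1 = (l, snd p) # r[j' := (fst (r ! j'), bm_add (Xo (fst (r ! j'))) \<xi> \<eta>)]"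
         "w2 = (l, snd p) # r[j' := (fst (r ! j'), \<xi>)]" "w3 = (l, snd p) # r[j' := (fst (r ! j'), \<eta>)]"
        unfolding w1_def w2_def w3_def using pr Suc p by (metis list_update_code(3) nth_Cons_Suc)+
      note H1 = LA[OF ar(1) j' x', where c = ?f]
      have a2: "alt_word Xo ((l, ?s) # r)" using alt_prefix[OF ar ss] .
      note H2 = rs_gen_add[OF a2, where j = "Suc j'" and \<xi> = \<xi> and \<eta> = \<eta>]
      have H2': "(\<lambda>u. dlt ((l, ?s) # r[j' := (fst (r ! j'), bm_add (Xo (fst (r ! j'))) \<xi> \<eta>)]) u
          - dlt ((l, ?s) # r[j' := (fst (r ! j'), \<xi>)]) u - dlt ((l, ?s) # r[j' := (fst (r ! j'), \<eta>)]) u) \<in> rel_sub Xo"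
        using H2 x' j' by simp
      show ?thesis using rs_comb3[OF H1 H2'] rne unfolding ws by (simp add: lw_cons)
    qed
  qed
qed

lemma BAL_CASE: fixes b :: 'b assumes op: "is_op (Xo l) a" and w: "alt_word Xo w" and j: "Suc j < length w"
  defines "w1 \<equiv> w[j := (fst (w ! j), bm_ract (Xo (fst (w ! j))) (snd (w ! j)) b)]"
    and "w2 \<equiv> w[Suc j := (fst (w ! Suc j), bm_lact (Xo (fst (w ! Suc j))) b (snd (w ! Suc j)))]"
  shows "fst (lam_word Xo l a w1) - fst (lam_word Xo l a w2) = 0
    \<and> (\<lambda>u. snd (lam_word Xo l a w1) u - snd (lam_word Xo l a w2) u) \<in> rel_sub Xo"
proof -
  obtain p r where pr: "w = p # r" using alt_nonempty[OF w] by (cases w) auto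
  let ?c1 = "fst (a (1, bm_zero (Xo l)))" and ?s1 = "snd (a (1, bm_zero (Xo l)))"
  have s1: "?s1 \<in> bm_car (Xo l)" using op_car2[OF bim op] bz[OF bim] by blast
  show ?thesis
  proof (cases "fst p = l")
    case False
    have ne: "w \<noteq> []" "fst (hd w) \<noteq> l" using pr False by auto
    have hd: "\<And>k v. fst (hd (w[k := (fst (w ! k), v)])) = fst (hd w)" using fst_hd_upd[OF ne(1)] by blast
    have ne': "\<And>k v. w[k := (fst (w ! k), v)] \<noteq> []" using ne(1) by simp
    have e: "\<And>k v. lam_word Xo l a (w[k := (fst (w ! k), v)]) = (0, \<lambda>u. dlt (lactw Xo ?c1 (w[k := (fst (w ! k), v)])) u
        + dlt ((l, ?s1) # (w[k := (fst (w ! k), v)])) u)"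
      using lw_neq[OF ne'] hd ne(2) by simp
    note H1 = LB[OF w j, where c = ?c1 and b = b]
    have a2: "alt_word Xo ((l, ?s1) # w)" using alt_prefix[OF w ne(2) s1] .
    note H2 = rs_gen_bal[OF a2, where j = "Suc j" and b = b]
    have H2': "(\<lambda>u. dlt ((l, ?s1) # w1) u - dlt ((l, ?s1) # w2) u) \<in> rel_sub Xo"
      using H2 j unfolding w1_def w2_def by simp
    show ?thesis using rs_comb2[OF H1 H2'] unfolding w1_def w2_def e by simp
  next
    case True
    then have p: "p = (l, snd p)" by (cases p) auto
    have sp: "snd p \<in> bm_car (Xo l)" using w pr True alt_hd by fastforce
    let ?f = "fst (a (0, snd p))" and ?s = "snd (a (0, snd p))"
    have ss: "?s \<in> bm_car (Xo l)" using op_car2[OF bim op sp] .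
    have rne: "r \<noteq> []" using j pr by auto
    have ar: "alt_word Xo r" "fst (hd r) \<noteq> l" using alt_tl[of p r] w pr rne True by auto
    have a2: "alt_word Xo ((l, ?s) # r)" using alt_prefix[OF ar ss] .
    show ?thesis
    proof (cases j)
      case 0
      obtain q r'' where qr: "r = q # r''" using rne by (cases r) auto
      have sq: "snd q \<in> bm_car (Xo (fst q))" using ar qr alt_hd by blast
      have ws: "w1 = (l, bm_ract (Xo l) (snd p) b) # q # r''" "w2 = (l, snd p) # (fst q, bm_lact (Xo (fst q)) b (snd q)) # r''"
        unfolding w1_def w2_def using pr qr 0 True p by simp_all
      note H = rs_gen_bal[OF a2, where j = 0 and b = b]
      have H': "(\<lambda>u. dlt ((l, bm_ract (Xo l) ?s b) # q # r'') u - dlt ((l, ?s) # (fst q, bm_lact (Xo (fst q)) b (snd q)) # r'') u) \<in> rel_sub Xo"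
        using H unfolding qr by simp
      have ar0: "a (0, bm_ract (Xo l) (snd p) b) = (?f * b, bm_ract (Xo l) ?s b)"
        by (rule op_ra0[OF bim op sp])
      show ?thesis using rs_comb2'[OF H'] unfolding ws by (simp add: lw_cons ar0 blamul[OF bim sq])
    next
      case (Suc j')
      have j': "Suc j' < length r" using j pr Suc by simp
      have ws: "w1 = (l, snd p) # r[j' := (fst (r ! j'), bm_ract (Xo (fst (r ! j'))) (snd (r ! j')) b)]"
         "w2 = (l, snd p) # r[Suc j' := (fst (r ! Suc j'), bm_lact (Xo (fst (r ! Suc j'))) b (snd (r ! Suc j')))]"
        unfolding w1_def w2_def using pr Suc p by simp_all
      note H1 = LB[OF ar(1) j', where c = ?f and b = b]
      note H2 = rs_gen_bal[OF a2, where j = "Suc j'" and b = b]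
      have H2': "(\<lambda>u. dlt ((l, ?s) # r[j' := (fst (r ! j'), bm_ract (Xo (fst (r ! j'))) (snd (r ! j')) b)]) u
          - dlt ((l, ?s) # r[Suc j' := (fst (r ! Suc j'), bm_lact (Xo (fst (r ! Suc j'))) b (snd (r ! Suc j')))]) u) \<in> rel_sub Xo"
        using H2 j' by simp
      show ?thesis using rs_comb2[OF H1 H2'] rne unfolding ws by (simp add: lw_cons)
    qed
  qed
qed

lemma gen_lam: assumes op: "is_op (Xo l) a" and h: "h \<in> rel_gens Xo"
  shows "lin (\<lambda>w. fst (lam_word Xo l a w)) h = 0 \<and> (\<lambda>u. lin (\<lambda>w. snd (lam_word Xo l a w) u) h) \<in> rel_sub Xo"
  using h unfolding rel_gens_def
proof (elim UnE CollectE exE conjE)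
  fix w j \<xi> \<eta>
  assume hh: "h = (\<lambda>u. dlt (w[j := (fst (w ! j), bm_add (Xo (fst (w ! j))) \<xi> \<eta>)]) u
            - dlt (w[j := (fst (w ! j), \<xi>)]) u - dlt (w[j := (fst (w ! j), \<eta>)]) u)"
    and c: "alt_word Xo w" "j < length w" "\<xi> \<in> bm_car (Xo (fst (w ! j)))" "\<eta> \<in> bm_car (Xo (fst (w ! j)))"
  show ?thesis using ADD_CASE[OF op c] unfolding hh lin3 by simp
next
  fix w j b
  assume hh: "h = (\<lambda>u. dlt (w[j := (fst (w ! j), bm_ract (Xo (fst (w ! j))) (snd (w ! j)) b)]) u
            - dlt (w[Suc j := (fst (w ! Suc j), bm_lact (Xo (fst (w ! Suc j))) b (snd (w ! Suc j)))]) u)"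
    and c: "alt_word Xo w" "Suc j < length w"
  show ?thesis using BAL_CASE[OF op c, where b = b] unfolding hh lin2 by simp
qed

lemma lam_WD: assumes op: "is_op (Xo l) a" and h: "h \<in> rel_sub Xo"
  shows "lin (\<lambda>w. fst (lam_word Xo l a w)) h = 0" "(\<lambda>u. lin (\<lambda>w. snd (lam_word Xo l a w) u) h) \<in> rel_sub Xo"
   apply (rule WDf[OF _ h], rule conjunct1[OF gen_lam[OF op]], assumption)
  apply (rule WDs[OF _ h], rule conjunct2[OF gen_lam[OF op]], assumption)
  done

lemma lam_eval: assumes op: "is_op (Xo l) a" and f: "f \<in> ZW Xo"
  shows "lam Xo l a (b, cls Xo f) = (fst (a (b, bm_zero (Xo l))) + lin (\<lambda>w. fst (lam_word Xo l a w)) f,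
     cls Xo (\<lambda>u. dlt [(l, snd (a (b, bm_zero (Xo l))))] u + lin (\<lambda>w. snd (lam_word Xo l a w) u) f))"
proof -
  have mem: "(b, cls Xo f) \<in> FPcar Xo" unfolding FPcar_def using f by blast
  define g where "g = rep Xo (cls Xo f)"
  have g: "g \<in> ZW Xo" "(\<lambda>u. f u - g u) \<in> rel_sub Xo" using rep_spec[OF f] g_def by auto
  have lam: "lam Xo l a (b, cls Xo f) = (fst (a (b, bm_zero (Xo l))) + lin (\<lambda>w. fst (lam_word Xo l a w)) g,
     cls Xo (\<lambda>u. dlt [(l, snd (a (b, bm_zero (Xo l))))] u + lin (\<lambda>w. snd (lam_word Xo l a w) u) g))"
    unfolding lam_def restr_def Let_def lin_def using mem g_def by simp
  have ff: "finite {w. f w \<noteq> 0}" "finite {w. g w \<noteq> 0}" using f g(1) ZW_fin by auto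
  have 1: "lin (\<lambda>w. fst (lam_word Xo l a w)) g = lin (\<lambda>w. fst (lam_word Xo l a w)) f"
    using lam_WD(1)[OF op g(2)] by (simp add: lin_diff[OF ff])
  have 2: "(\<lambda>u. lin (\<lambda>w. snd (lam_word Xo l a w) u) f - lin (\<lambda>w. snd (lam_word Xo l a w) u) g) \<in> rel_sub Xo"
    using lam_WD(2)[OF op g(2)] by (simp add: lin_diff[OF ff])
  have 3: "cls Xo (\<lambda>u. dlt [(l, snd (a (b, bm_zero (Xo l))))] u + lin (\<lambda>w. snd (lam_word Xo l a w) u) g)
     = cls Xo (\<lambda>u. dlt [(l, snd (a (b, bm_zero (Xo l))))] u + lin (\<lambda>w. snd (lam_word Xo l a w) u) f)"
    by (rule cls_eq) (rule rs_cong[OF rs_neg[OF 2]], simp)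
  show ?thesis using lam 1 3 by simp
qed

definition proj :: "'i \<Rightarrow> (('i \<times> 'x) list \<Rightarrow> int) \<Rightarrow> (('i \<times> 'x) list \<Rightarrow> int)" where
  "proj l f = (\<lambda>w. if (\<exists>\<xi>. w = [(l, \<xi>)]) then f w else 0)"

lemma issl_upd: "j < length w \<Longrightarrow> (\<exists>\<xi>. w[j := (fst (w ! j), v)] = [(l, \<xi>)]) \<longleftrightarrow> (\<exists>\<xi>. w = [(l, \<xi>)])"
proof (cases w)
  case Nil then show ?thesis by simp
next
  case (Cons p r)
  assume j: "j < length w"
  show ?thesis
  proof (cases "r = []")
    case True
    then have "j = 0" using j Cons by simp
    then show ?thesis using Cons True by (cases p) auto
  next
    case False
    have "length w \<noteq> 1" using Cons False by auto
    moreover have "length (w[j := (fst (w ! j), v)]) = length w" by (rule length_list_update)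
    ultimately have L: "length (w[j := (fst (w ! j), v)]) \<noteq> 1" "length w \<noteq> 1" by simp_all
    have n1: "\<not> (\<exists>\<xi>. w[j := (fst (w ! j), v)] = [(l, \<xi>)])"
    proof
      assume "\<exists>\<xi>. w[j := (fst (w ! j), v)] = [(l, \<xi>)]"
      then obtain \<xi> where "w[j := (fst (w ! j), v)] = [(l, \<xi>)]" by blast
      then have "length (w[j := (fst (w ! j), v)]) = 1" by simp
      then show False using L(1) by simp
    qed
    have n2: "\<not> (\<exists>\<xi>. w = [(l, \<xi>)])" using L(2) by auto
    show ?thesis using n1 n2 by blast
  qed
qed

lemma proj_shape: assumes "\<And>u. h u \<noteq> 0 \<Longrightarrow> ((\<exists>\<xi>. u = [(l, \<xi>)]) \<longleftrightarrow> P)"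
  shows "proj l h = (if P then h else (\<lambda>_. 0))"
proof -
  have "(if (\<exists>\<xi>. u = [(l, \<xi>)]) then h u else 0) = (if P then h u else 0)" for u
  proof (cases "h u = 0")
    case True then show ?thesis by simp
  next
    case False then show ?thesis using assms[OF False] by simp
  qed
  then show ?thesis unfolding proj_def by (auto intro!: ext)
qed

lemma proj_gen: assumes "h \<in> rel_gens Xo" shows "proj l h \<in> rel_sub Xo"
  using assms unfolding rel_gens_def
proof (elim UnE CollectE exE conjE)
  fix w j \<xi> \<eta>
  assume hh: "h = (\<lambda>u. dlt (w[j := (fst (w ! j), bm_add (Xo (fst (w ! j))) \<xi> \<eta>)]) u
            - dlt (w[j := (fst (w ! j), \<xi>)]) u - dlt (w[j := (fst (w ! j), \<eta>)]) u)"
    and c: "alt_word Xo w" "j < length w" "\<xi> \<in> bm_car (Xo (fst (w ! j)))" "\<eta> \<in> bm_car (Xo (fst (w ! j)))"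
  have "proj l h = (if (\<exists>\<xi>. w = [(l, \<xi>)]) then h else (\<lambda>_. 0))"
  proof (rule proj_shape)
    fix u assume nz: "h u \<noteq> 0"
    have "h u = 0" if "u \<noteq> w[j := (fst (w ! j), bm_add (Xo (fst (w ! j))) \<xi> \<eta>)]" "u \<noteq> w[j := (fst (w ! j), \<xi>)]"
      "u \<noteq> w[j := (fst (w ! j), \<eta>)]" using that by (simp add: hh dlt_def)
    then have "u = w[j := (fst (w ! j), bm_add (Xo (fst (w ! j))) \<xi> \<eta>)] \<or> u = w[j := (fst (w ! j), \<xi>)]
      \<or> u = w[j := (fst (w ! j), \<eta>)]" using nz by blast
    then show "(\<exists>\<xi>. u = [(l, \<xi>)]) \<longleftrightarrow> (\<exists>\<xi>. w = [(l, \<xi>)])"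
      by (elim disjE) (simp_all only: issl_upd[OF c(2)])
  qed
  moreover have "h \<in> rel_sub Xo" using rs_gen_add[OF c] hh by simp
  ultimately show ?thesis by (simp add: rs_zero)
next
  fix w j b
  assume hh: "h = (\<lambda>u. dlt (w[j := (fst (w ! j), bm_ract (Xo (fst (w ! j))) (snd (w ! j)) b)]) u
            - dlt (w[Suc j := (fst (w ! Suc j), bm_lact (Xo (fst (w ! Suc j))) b (snd (w ! Suc j)))]) u)"
    and c: "alt_word Xo w" "Suc j < length w"
  have "proj l h = (if False then h else (\<lambda>_. 0))"
  proof (rule proj_shape)
    fix u assume nz: "h u \<noteq> 0"
    have "h u = 0" if "u \<noteq> w[j := (fst (w ! j), bm_ract (Xo (fst (w ! j))) (snd (w ! j)) b)]"
      "u \<noteq> w[Suc j := (fst (w ! Suc j), bm_lact (Xo (fst (w ! Suc j))) b (snd (w ! Suc j)))]"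
      using that by (simp add: hh dlt_def)
    then have "length u = length w" using nz by fastforce
    then show "(\<exists>\<xi>. u = [(l, \<xi>)]) \<longleftrightarrow> False" using c(2) by auto
  qed
  then show ?thesis by (simp add: rs_zero)
qed

lemma proj_rs: "h \<in> rel_sub Xo \<Longrightarrow> proj l h \<in> rel_sub Xo"
proof (induction rule: rel_sub.induct)
  case (gen f) then show ?case by (rule proj_gen)
next
  case zero then show ?case by (simp add: proj_def rs_zero)
next
  case (diff f g)
  have "proj l (\<lambda>u. f u - g u) = (\<lambda>u. proj l f u - proj l g u)" unfolding proj_def by auto
  then show ?case using rs_diff[OF diff.IH] by simp
qed

lemma proj_ZW: "f \<in> ZW Xo \<Longrightarrow> proj l f \<in> ZW Xo"
proof -
  assume f: "f \<in> ZW Xo"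
  have "{w. proj l f w \<noteq> 0} \<subseteq> {w. f w \<noteq> 0}" unfolding proj_def by auto
  then have "finite {w. proj l f w \<noteq> 0}" using ZW_fin[OF f] finite_subset by blast
  moreover have "\<forall>w. proj l f w \<noteq> 0 \<longrightarrow> alt_word Xo w" using ZW_alt[OF f] unfolding proj_def by auto
  ultimately show ?thesis unfolding ZW_def by blast
qed

lemma Ppr_eval: assumes f: "f \<in> ZW Xo" shows "Ppr Xo l (b, cls Xo f) = (b, cls Xo (proj l f))"
proof -
  have mem: "(b, cls Xo f) \<in> FPcar Xo" unfolding FPcar_def using f by blast
  define g where "g = rep Xo (cls Xo f)"
  have g: "g \<in> ZW Xo" "(\<lambda>u. f u - g u) \<in> rel_sub Xo" using rep_spec[OF f] g_def by auto
  have P: "Ppr Xo l (b, cls Xo f) = (b, cls Xo (proj l g))"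
    unfolding Ppr_def restr_def proj_def g_def by (simp only: if_P[OF mem] snd_conv fst_conv)
  have "proj l (\<lambda>u. f u - g u) = (\<lambda>u. proj l f u - proj l g u)" unfolding proj_def by auto
  then have "(\<lambda>u. proj l f u - proj l g u) \<in> rel_sub Xo" using proj_rs[OF g(2), of l] by simp
  then have "(\<lambda>u. - (proj l f u - proj l g u)) \<in> rel_sub Xo" by (rule rs_neg)
  then have D: "(\<lambda>u. proj l g u - proj l f u) \<in> rel_sub Xo" by simp
  show ?thesis using P cls_eq[OF D] by simp
qed

lemma zero_word: assumes "alt_word Xo ((i, bm_zero (Xo i)) # r)" shows "dlt ((i, bm_zero (Xo i)) # r) \<in> rel_sub Xo"
proof -
  have z: "bm_zero (Xo i) \<in> bm_car (Xo i)" by (rule bz[OF bim])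
  have zz: "bm_add (Xo i) (bm_zero (Xo i)) (bm_zero (Xo i)) = bm_zero (Xo i)" using bzl[OF bim z] .
  have "(\<lambda>u. dlt ((i, bm_zero (Xo i)) # r) u - dlt ((i, bm_zero (Xo i)) # r) u - dlt ((i, bm_zero (Xo i)) # r) u) \<in> rel_sub Xo"
    using rs_gen_add[OF assms, where j = 0 and \<xi> = "bm_zero (Xo i)" and \<eta> = "bm_zero (Xo i)"] z zz by simp
  from rs_neg[OF this] show ?thesis by (simp add: fun_eq_iff)
qed

lemma zero_single: "dlt [(l, bm_zero (Xo l))] \<in> rel_sub Xo"
  using zero_word[of l "[]"] by (simp add: alt_single bz[OF bim])

lemma lactw_len: "length (lactw Xo c w) = length w"
  by (cases w) (auto simp: lactw_def)

lemma lactw_hd: "w \<noteq> [] \<Longrightarrow> fst (hd (lactw Xo c w)) = fst (hd w)"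
  by (cases w) auto

lemma dlt2_nz: "dlt A u + dlt B u \<noteq> 0 \<Longrightarrow> u = A \<or> u = B"
  by (auto simp: dlt_def split: if_splits)

lemma FP_iff: "x \<in> FPcar Xo \<longleftrightarrow> (\<exists>b f. f \<in> ZW Xo \<and> x = (b, cls Xo f))"
  unfolding FPcar_def mem_Collect_eq by auto

lemma lam_snd_ZW: assumes op: "is_op (Xo l) a" and f: "f \<in> ZW Xo" and s: "s \<in> bm_car (Xo l)"
  shows "(\<lambda>u. dlt [(l, s)] u + lin (\<lambda>w. snd (lam_word Xo l a w) u) f) \<in> ZW Xo"
proof -
  have 1: "dlt [(l, s)] \<in> ZW Xo" by (rule ZW_dlt) (simp add: alt_single s)
  have 2: "(\<lambda>u. lin (\<lambda>w. snd (lam_word Xo l a w) u) f) \<in> ZW Xo"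
    by (rule ZW_lin[OF f]) (rule lw_ZW[OF op ZW_alt[OF f]])
  show ?thesis using ZW_add[OF 1 2] .
qed

lemma lam_FP: assumes op: "is_op (Xo l) a" and x: "x \<in> FPcar Xo" shows "lam Xo l a x \<in> FPcar Xo"
proof -
  obtain b f where f: "f \<in> ZW Xo" and xe: "x = (b, cls Xo f)" using x FP_iff by blast
  have s: "snd (a (b, bm_zero (Xo l))) \<in> bm_car (Xo l)" using op_car2[OF bim op bz[OF bim]] .
  show ?thesis unfolding xe lam_eval[OF op f] FP_iff using lam_snd_ZW[OF op f s] by blast
qed

lemma Ppr_FP: assumes x: "x \<in> FPcar Xo" shows "Ppr Xo l x \<in> FPcar Xo"
proof -
  obtain b f where f: "f \<in> ZW Xo" and xe: "x = (b, cls Xo f)" using x FP_iff by blast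
  show ?thesis unfolding xe Ppr_eval[OF f] FP_iff using proj_ZW[OF f] by blast
qed

definition Rset :: "'i \<Rightarrow> ('b, 'i, 'x) fpel set" where
  "Rset l = {(\<beta>, cls Xo g) | \<beta> g. g \<in> ZW Xo \<and> (\<forall>w. g w \<noteq> 0 \<longrightarrow> (\<exists>\<xi>. w = [(l, \<xi>)]))}"

definition Jset :: "'i \<Rightarrow> ('b, 'i, 'x) fpel set" where
  "Jset l = {(0, cls Xo g) | g. g \<in> ZW Xo \<and> (\<forall>w. g w \<noteq> 0 \<longrightarrow> 2 \<le> length w \<and> (fst (hd w) = l \<longrightarrow> 3 \<le> length w))}"

definition Zset :: "('b, 'i, 'x) fpel set" where
  "Zset = {(0, cls Xo (\<lambda>_. 0))}"

lemma Rset_FP: "x \<in> Rset l \<Longrightarrow> x \<in> FPcar Xo"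
  unfolding Rset_def FP_iff by blast

lemma Jset_FP: "x \<in> Jset l \<Longrightarrow> x \<in> FPcar Xo"
  unfolding Jset_def FP_iff by blast

lemma Zset_J: "x \<in> Zset \<Longrightarrow> x \<in> Jset l"
  unfolding Zset_def Jset_def using ZW_zero by auto

lemma Zset_FP: "x \<in> Zset \<Longrightarrow> x \<in> FPcar Xo"
  using Zset_J Jset_FP by blast

lemma Ppr_R: assumes x: "x \<in> FPcar Xo" shows "Ppr Xo l x \<in> Rset l"
proof -
  obtain b f where f: "f \<in> ZW Xo" and xe: "x = (b, cls Xo f)" using x FP_iff by blast
  have "\<forall>w. proj l f w \<noteq> 0 \<longrightarrow> (\<exists>\<xi>. w = [(l, \<xi>)])" unfolding proj_def by auto
  then show ?thesis unfolding xe Ppr_eval[OF f] Rset_def using proj_ZW[OF f] by blast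
qed

lemma lam_R: assumes op: "is_op (Xo l) a" and x: "x \<in> Rset l" shows "lam Xo l a x \<in> Rset l"
proof -
  obtain b g where g: "g \<in> ZW Xo" and gs: "\<forall>w. g w \<noteq> 0 \<longrightarrow> (\<exists>\<xi>. w = [(l, \<xi>)])" and xe: "x = (b, cls Xo g)"
    using x unfolding Rset_def by blast
  let ?s = "snd (a (b, bm_zero (Xo l)))"
  have s: "?s \<in> bm_car (Xo l)" using op_car2[OF bim op bz[OF bim]] .
  have "\<exists>\<xi>. u = [(l, \<xi>)]" if nz: "dlt [(l, ?s)] u + lin (\<lambda>w. snd (lam_word Xo l a w) u) g \<noteq> 0" for u
  proof (cases "u = [(l, ?s)]")
    case True then show ?thesis by blast
  next
    case False
    then have "lin (\<lambda>w. snd (lam_word Xo l a w) u) g \<noteq> 0" using nz by (simp add: dlt_def)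
    then obtain w where w: "g w \<noteq> 0" "snd (lam_word Xo l a w) u \<noteq> 0" using lin_supp[of "\<lambda>w. snd (lam_word Xo l a w)" u g] by blast
    obtain \<xi> where "w = [(l, \<xi>)]" using gs w(1) by blast
    then have "u = [(l, snd (a (0, \<xi>)))]" using w(2) by (simp add: lw_single dlt_def split: if_splits)
    then show ?thesis by blast
  qed
  then show ?thesis unfolding xe lam_eval[OF op g] Rset_def using lam_snd_ZW[OF op g s] by blast
qed

lemma lam_J: assumes op: "is_op (Xo l) a" and x: "x \<in> Jset l" shows "lam Xo l a x \<in> Jset l"
proof -
  obtain g where g: "g \<in> ZW Xo" and gs: "\<forall>w. g w \<noteq> 0 \<longrightarrow> 2 \<le> length w \<and> (fst (hd w) = l \<longrightarrow> 3 \<le> length w)"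
    and xe: "x = (0, cls Xo g)" using x unfolding Jset_def by blast
  have z0: "a (0, bm_zero (Xo l)) = (0, bm_zero (Xo l))" by (rule op_zero[OF bim op])
  have f0: "lin (\<lambda>w. fst (lam_word Xo l a w)) g = 0"
  proof (rule lin_zero_if)
    fix w assume w: "g w \<noteq> 0"
    show "fst (lam_word Xo l a w) = 0"
    proof (rule ccontr)
      assume "fst (lam_word Xo l a w) \<noteq> 0"
      then obtain \<xi> where "w = [(l, \<xi>)]" using lw_fst alt_nonempty[OF ZW_alt[OF g w]] by blast
      then show False using gs w by auto
    qed
  qed
  define G where "G = (\<lambda>u. lin (\<lambda>w. snd (lam_word Xo l a w) u) g)"
  have GZ: "G \<in> ZW Xo" unfolding G_def by (rule ZW_lin[OF g]) (rule lw_ZW[OF op ZW_alt[OF g]])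
  have ce: "cls Xo (\<lambda>u. dlt [(l, bm_zero (Xo l))] u + G u) = cls Xo G"
    by (rule cls_eq) (simp add: zero_single)
  have Gs: "2 \<le> length u \<and> (fst (hd u) = l \<longrightarrow> 3 \<le> length u)" if nz: "G u \<noteq> 0" for u
  proof -
    obtain w where w: "g w \<noteq> 0" "snd (lam_word Xo l a w) u \<noteq> 0" using lin_supp[of "\<lambda>w. snd (lam_word Xo l a w)" u g] nz unfolding G_def by blast
    have aw: "alt_word Xo w" using ZW_alt[OF g w(1)] .
    obtain p r where pr: "w = p # r" using alt_nonempty[OF aw] by (cases w) auto
    have lw: "2 \<le> length w" "fst (hd w) = l \<longrightarrow> 3 \<le> length w" using gs w(1) by auto
    then have rne: "r \<noteq> []" using pr by auto
    show ?thesis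
    proof (cases "fst p = l")
      case False
      have ne: "w \<noteq> []" "fst (hd w) \<noteq> l" using pr False by auto
      have "snd (lam_word Xo l a w) = (\<lambda>u. dlt (lactw Xo (fst (a (1, bm_zero (Xo l)))) w) u + dlt ((l, snd (a (1, bm_zero (Xo l)))) # w) u)"
        using lw_neq[OF ne] by simp
      then have "dlt (lactw Xo (fst (a (1, bm_zero (Xo l)))) w) u + dlt ((l, snd (a (1, bm_zero (Xo l)))) # w) u \<noteq> 0"
        using w(2) by simp
      then have "u = lactw Xo (fst (a (1, bm_zero (Xo l)))) w \<or> u = (l, snd (a (1, bm_zero (Xo l)))) # w"
        by (rule dlt2_nz)
      then show ?thesis
      proof
        assume u: "u = lactw Xo (fst (a (1, bm_zero (Xo l)))) w"
        have "length u = length w" "fst (hd u) = fst (hd w)" unfolding u using lactw_len lactw_hd[OF ne(1)] by blast+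
        then show ?thesis using lw ne(2) by simp
      next
        assume u: "u = (l, snd (a (1, bm_zero (Xo l)))) # w"
        then show ?thesis using lw by simp
      qed
    next
      case True
      then have p: "p = (l, snd p)" by (cases p) auto
      have ar: "alt_word Xo r" "fst (hd r) \<noteq> l" using alt_tl[of p r] aw pr rne True by auto
      have l3: "2 \<le> length r" using lw pr True by simp
      have "snd (lam_word Xo l a w) = (\<lambda>u. dlt (lactw Xo (fst (a (0, snd p))) r) u + dlt ((l, snd (a (0, snd p))) # r) u)"
        using lw_cons[OF rne, of l a "snd p"] pr p by (metis snd_conv)
      then have "dlt (lactw Xo (fst (a (0, snd p))) r) u + dlt ((l, snd (a (0, snd p))) # r) u \<noteq> 0"
        using w(2) by simp
      then have "u = lactw Xo (fst (a (0, snd p))) r \<or> u = (l, snd (a (0, snd p))) # r"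
        by (rule dlt2_nz)
      then show ?thesis
      proof
        assume u: "u = lactw Xo (fst (a (0, snd p))) r"
        have "length u = length r" "fst (hd u) = fst (hd r)" unfolding u using lactw_len lactw_hd[OF rne] by blast+
        then show ?thesis using l3 ar(2) by simp
      next
        assume u: "u = (l, snd (a (0, snd p))) # r"
        then show ?thesis using l3 by simp
      qed
    qed
  qed
  show ?thesis unfolding xe lam_eval[OF op g] z0 Jset_def fst_conv snd_conv f0
    using ce GZ Gs unfolding G_def by auto
qed

lemma Ppr_J: assumes x: "x \<in> Jset l'" shows "Ppr Xo l x \<in> Zset"
proof -
  obtain g where g: "g \<in> ZW Xo" and gs: "\<forall>w. g w \<noteq> 0 \<longrightarrow> 2 \<le> length w \<and> (fst (hd w) = l' \<longrightarrow> 3 \<le> length w)"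
    and xe: "x = (0, cls Xo g)" using x unfolding Jset_def by blast
  have g0: "g [(l, \<xi>)] = 0" for \<xi>
  proof (rule ccontr)
    assume "g [(l, \<xi>)] \<noteq> 0"
    then have "2 \<le> length [(l, \<xi>)]" using gs by blast
    then show False by simp
  qed
  have "proj l g = (\<lambda>_. 0)" unfolding proj_def using g0 by (auto intro!: ext)
  then show ?thesis unfolding xe Ppr_eval[OF g] Zset_def by simp
qed

lemma lam_Z: assumes op: "is_op (Xo l) a" and x: "x \<in> Zset" shows "lam Xo l a x \<in> Zset"
proof -
  have xe: "x = (0, cls Xo (\<lambda>_. 0))" using x unfolding Zset_def by blast
  have z0: "a (0, bm_zero (Xo l)) = (0, bm_zero (Xo l))" by (rule op_zero[OF bim op])
  have ce: "cls Xo (\<lambda>u. dlt [(l, bm_zero (Xo l))] u + lin (\<lambda>w. snd (lam_word Xo l a w) u) (\<lambda>_. 0)) = cls Xo (\<lambda>_. 0)"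
    by (rule cls_eq) (simp add: zero_single lin_zero)
  show ?thesis unfolding xe lam_eval[OF op ZW_zero] z0 Zset_def fst_conv snd_conv ce by (simp add: lin_zero)
qed

lemma Ppr_Z: assumes x: "x \<in> Zset" shows "Ppr Xo l x \<in> Zset"
proof -
  have xe: "x = (0, cls Xo (\<lambda>_. 0))" using x unfolding Zset_def by blast
  have "proj l (\<lambda>_. 0) = (\<lambda>_. 0)" unfolding proj_def by auto
  then show ?thesis unfolding xe Ppr_eval[OF ZW_zero] Zset_def by simp
qed

end

lemma lin_plus: "lin (\<lambda>t. P t + Q t) F = lin P F + lin Q F"
  unfolding lin_def by (simp add: distrib_left sum.distrib)

lemma lin_minus: "lin (\<lambda>t. P t - Q t) F = lin P F - lin Q F"
  unfolding lin_def by (simp add: right_diff_distrib sum_subtractf)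

lemma lin_int: "lin (Y :: ('i \<times> 'x) list \<Rightarrow> int) F = (\<Sum>t\<in>{t. F t \<noteq> 0}. F t * Y t)"
  unfolding lin_def by simp

lemma lin_lin: assumes F: "finite {t. F t \<noteq> 0}" and Y: "\<And>t. F t \<noteq> 0 \<Longrightarrow> finite {u. Y t u \<noteq> 0}"
  shows "lin X (\<lambda>u. lin (\<lambda>t. Y t u) F) = lin (\<lambda>t. lin X (Y t)) F"
proof -
  have "lin X (\<lambda>u. lin (\<lambda>t. Y t u) F) = lin X (\<lambda>u. \<Sum>t\<in>{t. F t \<noteq> 0}. F t * Y t u)"
    by (simp add: lin_int)
  also have "\<dots> = (\<Sum>t\<in>{t. F t \<noteq> 0}. lin X (\<lambda>u. F t * Y t u))"
  proof (rule lin_sum[OF F])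
    fix t assume "t \<in> {t. F t \<noteq> 0}"
    then have "finite {u. Y t u \<noteq> 0}" using Y by simp
    then show "finite {u. F t * Y t u \<noteq> 0}" by (rule finite_subset[rotated]) auto
  qed
  also have "\<dots> = (\<Sum>t\<in>{t. F t \<noteq> 0}. of_int (F t) * lin X (Y t))"
    by (rule sum.cong) (auto simp: lin_smul Y)
  also have "\<dots> = lin (\<lambda>t. lin X (Y t)) F" unfolding lin_def ..
  finally show ?thesis .
qed

lemma rs_lin: assumes F: "finite {t. F t \<noteq> 0}" and D: "\<And>t. F t \<noteq> 0 \<Longrightarrow> D t \<in> rel_sub Xo"
  shows "(\<lambda>u. lin (\<lambda>t. D t u) F) \<in> rel_sub Xo"
proof -
  have "(\<lambda>u. \<Sum>t\<in>{t. F t \<noteq> 0}. F t * D t u) \<in> rel_sub Xo"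
    by (rule rs_sum[OF F]) (rule rs_smul, simp add: D)
  then show ?thesis by (simp add: lin_int)
qed

lemma lin_dlt_self: assumes F: "finite {t. F t \<noteq> 0}" shows "lin (\<lambda>t. dlt t u) F = F u"
proof (cases "F u = 0")
  case True
  have "lin (\<lambda>t. dlt t u) F = 0" by (rule lin_zero_if) (use True in \<open>auto simp: dlt_def\<close>)
  then show ?thesis using True by simp
next
  case False
  have "lin (\<lambda>t. dlt t u) F = (\<Sum>t\<in>{t. F t \<noteq> 0}. F t * dlt t u)" by (simp add: lin_int)
  also have "\<dots> = (\<Sum>t\<in>{u}. F t * dlt t u)"
    by (rule sum.mono_neutral_right) (use F False in \<open>auto simp: dlt_def\<close>)
  finally show ?thesis by (simp add: dlt_def)
qed

context fpc
begin

definition Vr :: "'i \<Rightarrow> 'b \<times> 'x \<Rightarrow> 'b \<times> 'x \<Rightarrow> (('i \<times> 'x) list \<Rightarrow> int) \<Rightarrow> (('i \<times> 'x) list \<Rightarrow> int)" where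
  "Vr l x y F = (\<lambda>u. dlt [(l, snd x)] u + lin (\<lambda>t. dlt (lactw Xo (fst y) t) u + dlt ((l, snd y) # t) u) F)"

definition VC :: "'i \<Rightarrow> (('i \<times> 'x) list \<Rightarrow> int) \<Rightarrow> bool" where
  "VC l F \<longleftrightarrow> F \<in> ZW Xo \<and> (\<forall>t. F t \<noteq> 0 \<longrightarrow> fst (hd t) \<noteq> l)"

lemma Vr_ZW: assumes x: "snd x \<in> bm_car (Xo l)" and y: "snd y \<in> bm_car (Xo l)" and F: "VC l F"
  shows "Vr l x y F \<in> ZW Xo"
proof -
  have F1: "F \<in> ZW Xo" and F2: "\<And>t. F t \<noteq> 0 \<Longrightarrow> fst (hd t) \<noteq> l" using F unfolding VC_def by auto
  have 1: "dlt [(l, snd x)] \<in> ZW Xo" by (rule ZW_dlt) (simp add: alt_single x)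
  have 2: "(\<lambda>u. lin (\<lambda>t. dlt (lactw Xo (fst y) t) u + dlt ((l, snd y) # t) u) F) \<in> ZW Xo"
  proof (rule ZW_lin[OF F1])
    fix t assume t: "F t \<noteq> 0"
    have at: "alt_word Xo t" using ZW_alt[OF F1 t] .
    have a2: "alt_word Xo ((l, snd y) # t)" using alt_prefix[OF at F2[OF t] y] .
    show "(\<lambda>u. dlt (lactw Xo (fst y) t) u + dlt ((l, snd y) # t) u) \<in> ZW Xo"
      using ZW_add[OF ZW_dlt[OF alt_lactw[OF at]] ZW_dlt[OF a2]] .
  qed
  show ?thesis unfolding Vr_def using ZW_add[OF 1 2] .
qed

end

lemma lin_V: assumes F: "finite {t. F t \<noteq> 0}"
  shows "lin X (\<lambda>u. dlt w0 u + lin (\<lambda>t. dlt (A t) u + dlt (B t) u) F) = X w0 + lin (\<lambda>t. X (A t) + X (B t)) F"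
proof -
  have sub: "{u. lin (\<lambda>t. dlt (A t) u + dlt (B t) u) F \<noteq> 0} \<subseteq> A ` {t. F t \<noteq> 0} \<union> B ` {t. F t \<noteq> 0}"
  proof
    fix u assume "u \<in> {u. lin (\<lambda>t. dlt (A t) u + dlt (B t) u) F \<noteq> 0}"
    then obtain t where t: "F t \<noteq> 0" "dlt (A t) u + dlt (B t) u \<noteq> 0"
      using lin_supp[of "\<lambda>t u. dlt (A t) u + dlt (B t) u" u F] by auto
    then have "u = A t \<or> u = B t" by (auto simp: dlt_def split: if_splits)
    then show "u \<in> A ` {t. F t \<noteq> 0} \<union> B ` {t. F t \<noteq> 0}" using t(1) by blast
  qed
  have fW: "finite {u. lin (\<lambda>t. dlt (A t) u + dlt (B t) u) F \<noteq> 0}"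
    by (rule finite_subset[OF sub]) (use F in simp)
  have "lin X (\<lambda>u. dlt w0 u + lin (\<lambda>t. dlt (A t) u + dlt (B t) u) F)
      = lin X (dlt w0) + lin X (\<lambda>u. lin (\<lambda>t. dlt (A t) u + dlt (B t) u) F)"
    by (rule lin_add[OF dlt_fin fW])
  also have "lin X (\<lambda>u. lin (\<lambda>t. dlt (A t) u + dlt (B t) u) F) = lin (\<lambda>t. lin X (\<lambda>u. dlt (A t) u + dlt (B t) u)) F"
  proof (rule lin_lin[OF F])
    fix t
    have "{u. dlt (A t) u + dlt (B t) u \<noteq> 0} \<subseteq> {A t, B t}" by (auto simp: dlt_def split: if_splits)
    then show "finite {u. dlt (A t) u + dlt (B t) u \<noteq> 0}" by (rule finite_subset) simp
  qed
  also have "(\<lambda>t. lin X (\<lambda>u. dlt (A t) u + dlt (B t) u)) = (\<lambda>t. X (A t) + X (B t))"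
    by (auto simp: lin_add[OF dlt_fin dlt_fin] lin_dlt intro!: ext)
  finally show ?thesis by (simp add: lin_dlt)
qed

context fpc
begin

lemma Xcar_iff: "x \<in> Xcar M \<longleftrightarrow> snd x \<in> bm_car M"
  unfolding Xcar_def by (cases x) auto

lemma V_lam: assumes op: "is_op (Xo l) a" and x: "x \<in> Xcar (Xo l)" and y: "y \<in> Xcar (Xo l)" and F: "VC l F"
  shows "lam Xo l a (fst x, cls Xo (Vr l x y F)) = (fst (a x), cls Xo (Vr l (a x) (a y) F))"
proof -
  obtain b \<xi> where xe: "x = (b, \<xi>)" by (cases x)
  obtain \<gamma> \<sigma> where ye: "y = (\<gamma>, \<sigma>)" by (cases y)
  have \<xi>: "\<xi> \<in> bm_car (Xo l)" and \<sigma>: "\<sigma> \<in> bm_car (Xo l)" using x y unfolding xe ye by (simp_all add: Xcar_iff)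
  have F1: "F \<in> ZW Xo" and F2: "\<And>t. F t \<noteq> 0 \<Longrightarrow> fst (hd t) \<noteq> l" using F unfolding VC_def by auto
  have Ffin: "finite {t. F t \<noteq> 0}" using ZW_fin[OF F1] .
  let ?z = "bm_zero (Xo l)"
  let ?c1 = "fst (a (1, ?z))" and ?s1 = "snd (a (1, ?z))"
  let ?sb = "snd (a (b, ?z))" and ?s0 = "snd (a (0, \<xi>))" and ?c2 = "fst (a (0, \<sigma>))" and ?s2 = "snd (a (0, \<sigma>))"
  have s1: "?s1 \<in> bm_car (Xo l)" using op_car2[OF bim op bz[OF bim]] .
  have sb: "?sb \<in> bm_car (Xo l)" using op_car2[OF bim op bz[OF bim]] .
  have s0: "?s0 \<in> bm_car (Xo l)" using op_car2[OF bim op \<xi>] .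
  have s2: "?s2 \<in> bm_car (Xo l)" using op_car2[OF bim op \<sigma>] .
  have ax: "a x = (fst (a (b, ?z)) + fst (a (0, \<xi>)), bm_add (Xo l) ?sb ?s0)"
    unfolding xe by (rule op_split[OF bim op \<xi>])
  have ay: "a y = (\<gamma> * ?c1 + ?c2, bm_add (Xo l) (bm_lact (Xo l) \<gamma> ?s1) ?s2)"
    unfolding ye using op_split[OF bim op \<sigma>, of \<gamma>] op_scal_l[OF bim op, of \<gamma>] by simp
  have VZ: "Vr l x y F \<in> ZW Xo" using Vr_ZW[OF _ _ F] \<xi> \<sigma> xe ye by simp
  have VV: "Vr l x y F = (\<lambda>u. dlt [(l, \<xi>)] u + lin (\<lambda>t. dlt (lactw Xo \<gamma> t) u + dlt ((l, \<sigma>) # t) u) F)"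
    unfolding Vr_def xe ye by simp
  have tprop: "alt_word Xo t \<and> t \<noteq> [] \<and> fst (hd t) \<noteq> l" if "F t \<noteq> 0" for t
    using ZW_alt[OF F1 that] alt_nonempty F2[OF that] by blast
  have linf: "lin (\<lambda>w. fst (lam_word Xo l a w)) (Vr l x y F) = fst (a (0, \<xi>))"
  proof -
    have "lin (\<lambda>w. fst (lam_word Xo l a w)) (Vr l x y F) = fst (lam_word Xo l a [(l, \<xi>)])
       + lin (\<lambda>t. fst (lam_word Xo l a (lactw Xo \<gamma> t)) + fst (lam_word Xo l a ((l, \<sigma>) # t))) F"
      unfolding VV by (rule lin_V[OF Ffin])
    also have "lin (\<lambda>t. fst (lam_word Xo l a (lactw Xo \<gamma> t)) + fst (lam_word Xo l a ((l, \<sigma>) # t))) F = 0"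
    proof (rule lin_zero_if)
      fix t assume "F t \<noteq> 0"
      then have tp: "t \<noteq> []" "fst (hd t) \<noteq> l" using tprop by auto
      have "lactw Xo \<gamma> t \<noteq> []" "fst (hd (lactw Xo \<gamma> t)) \<noteq> l" using tp lactw_hd lactw_len
        by (metis length_0_conv, metis)
      then show "fst (lam_word Xo l a (lactw Xo \<gamma> t)) + fst (lam_word Xo l a ((l, \<sigma>) # t)) = 0"
        using lw_neq[of "lactw Xo \<gamma> t" l a] lw_cons[OF tp(1), of l a \<sigma>] by simp
    qed
    finally show ?thesis by (simp add: lw_single)
  qed
  have lins: "lin (\<lambda>w. snd (lam_word Xo l a w) u) (Vr l x y F) = dlt [(l, ?s0)] u
     + lin (\<lambda>t. (dlt (lactw Xo ?c1 (lactw Xo \<gamma> t)) u + dlt ((l, ?s1) # lactw Xo \<gamma> t) u)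
              + (dlt (lactw Xo ?c2 t) u + dlt ((l, ?s2) # t) u)) F" for u
  proof -
    have "lin (\<lambda>w. snd (lam_word Xo l a w) u) (Vr l x y F) = snd (lam_word Xo l a [(l, \<xi>)]) u
       + lin (\<lambda>t. snd (lam_word Xo l a (lactw Xo \<gamma> t)) u + snd (lam_word Xo l a ((l, \<sigma>) # t)) u) F"
      unfolding VV by (rule lin_V[OF Ffin])
    also have "lin (\<lambda>t. snd (lam_word Xo l a (lactw Xo \<gamma> t)) u + snd (lam_word Xo l a ((l, \<sigma>) # t)) u) F
       = lin (\<lambda>t. (dlt (lactw Xo ?c1 (lactw Xo \<gamma> t)) u + dlt ((l, ?s1) # lactw Xo \<gamma> t) u)
              + (dlt (lactw Xo ?c2 t) u + dlt ((l, ?s2) # t) u)) F"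
    proof (rule lin_cong)
      fix t assume "F t \<noteq> 0"
      then have tp: "t \<noteq> []" "fst (hd t) \<noteq> l" using tprop by auto
      have "lactw Xo \<gamma> t \<noteq> []" "fst (hd (lactw Xo \<gamma> t)) \<noteq> l" using tp lactw_hd lactw_len
        by (metis length_0_conv, metis)
      then show "snd (lam_word Xo l a (lactw Xo \<gamma> t)) u + snd (lam_word Xo l a ((l, \<sigma>) # t)) u
        = (dlt (lactw Xo ?c1 (lactw Xo \<gamma> t)) u + dlt ((l, ?s1) # lactw Xo \<gamma> t) u)
              + (dlt (lactw Xo ?c2 t) u + dlt ((l, ?s2) # t) u)"
        using lw_neq[of "lactw Xo \<gamma> t" l a] lw_cons[OF tp(1), of l a \<sigma>] by simp
    qed
    finally show ?thesis by (simp add: lw_single)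
  qed
  have Dt: "(\<lambda>u. ((dlt (lactw Xo ?c1 (lactw Xo \<gamma> t)) u + dlt ((l, ?s1) # lactw Xo \<gamma> t) u)
              + (dlt (lactw Xo ?c2 t) u + dlt ((l, ?s2) # t) u))
          - (dlt (lactw Xo (\<gamma> * ?c1 + ?c2) t) u + dlt ((l, bm_add (Xo l) (bm_lact (Xo l) \<gamma> ?s1) ?s2) # t) u))
      \<in> rel_sub Xo" if Ft: "F t \<noteq> 0" for t
  proof -
    have tp: "alt_word Xo t" "t \<noteq> []" "fst (hd t) \<noteq> l" using tprop[OF Ft] by auto
    obtain i0 x0 t' where te: "t = (i0, x0) # t'" using tp(2) by (cases t) auto
    have x0: "x0 \<in> bm_car (Xo i0)" using tp(1) te alt_hd by fastforce
    have e1: "lactw Xo ?c1 (lactw Xo \<gamma> t) = (i0, bm_lact (Xo i0) (\<gamma> * ?c1) x0) # t'"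
      unfolding te using blamul[OF bim x0, of ?c1 \<gamma>] op_central[OF bim op, of \<gamma>] by simp
    have e3: "lactw Xo (\<gamma> * ?c1 + ?c2) t = (i0, bm_add (Xo i0) (bm_lact (Xo i0) (\<gamma> * ?c1) x0) (bm_lact (Xo i0) ?c2 x0)) # t'"
      unfolding te using bladd[OF bim x0] by simp
    have e5: "bm_ract (Xo l) ?s1 \<gamma> = bm_lact (Xo l) \<gamma> ?s1" using op_central2[OF bim op, of \<gamma>] by simp
    have a1: "alt_word Xo ((i0, bm_lact (Xo i0) (\<gamma> * ?c1) x0) # t')"
      using tp(1) te x0 bla[OF bim] by (simp add: alt_Cons)
    note R1 = rs_gen_add[OF a1, where j = 0 and \<xi> = "bm_lact (Xo i0) (\<gamma> * ?c1) x0" and \<eta> = "bm_lact (Xo i0) ?c2 x0"]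
    have a2: "alt_word Xo ((l, bm_lact (Xo l) \<gamma> ?s1) # t)" using alt_prefix[OF tp(1) tp(3)] bla[OF bim s1] by blast
    note R2 = rs_gen_add[OF a2, where j = 0 and \<xi> = "bm_lact (Xo l) \<gamma> ?s1" and \<eta> = ?s2]
    have a3: "alt_word Xo ((l, ?s1) # t)" using alt_prefix[OF tp(1) tp(3) s1] .
    note R3 = rs_gen_bal[OF a3, where j = 0 and b = \<gamma>]
    have R1': "(\<lambda>u. dlt (lactw Xo (\<gamma> * ?c1 + ?c2) t) u - dlt (lactw Xo ?c1 (lactw Xo \<gamma> t)) u - dlt (lactw Xo ?c2 t) u) \<in> rel_sub Xo"
      using R1 x0 bla[OF bim x0] unfolding e1 e3 by (simp add: te)
    have R2': "(\<lambda>u. dlt ((l, bm_add (Xo l) (bm_lact (Xo l) \<gamma> ?s1) ?s2) # t) u - dlt ((l, bm_lact (Xo l) \<gamma> ?s1) # t) u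
        - dlt ((l, ?s2) # t) u) \<in> rel_sub Xo"
      using R2 bla[OF bim s1] s2 by simp
    have R3': "(\<lambda>u. dlt ((l, bm_lact (Xo l) \<gamma> ?s1) # t) u - dlt ((l, ?s1) # lactw Xo \<gamma> t) u) \<in> rel_sub Xo"
      using R3 e5 by (simp add: te)
    have "(\<lambda>u. - (dlt (lactw Xo (\<gamma> * ?c1 + ?c2) t) u - dlt (lactw Xo ?c1 (lactw Xo \<gamma> t)) u - dlt (lactw Xo ?c2 t) u)
       + (- (dlt ((l, bm_add (Xo l) (bm_lact (Xo l) \<gamma> ?s1) ?s2) # t) u - dlt ((l, bm_lact (Xo l) \<gamma> ?s1) # t) u
        - dlt ((l, ?s2) # t) u) + - (dlt ((l, bm_lact (Xo l) \<gamma> ?s1) # t) u - dlt ((l, ?s1) # lactw Xo \<gamma> t) u))) \<in> rel_sub Xo"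
      by (rule rs_add[OF rs_neg[OF R1'] rs_add[OF rs_neg[OF R2'] rs_neg[OF R3']]])
    then show ?thesis by (rule rs_cong) (simp add: algebra_simps)
  qed
  have D0: "(\<lambda>u. (dlt [(l, ?sb)] u + dlt [(l, ?s0)] u) - dlt [(l, bm_add (Xo l) ?sb ?s0)] u) \<in> rel_sub Xo"
  proof -
    have a: "alt_word Xo [(l, ?sb)]" by (simp add: alt_single sb)
    note R = rs_gen_add[OF a, where j = 0 and \<xi> = ?sb and \<eta> = ?s0]
    have "(\<lambda>u. dlt [(l, bm_add (Xo l) ?sb ?s0)] u - dlt [(l, ?sb)] u - dlt [(l, ?s0)] u) \<in> rel_sub Xo"
      using R sb s0 by simp
    from rs_neg[OF this] show ?thesis by (rule rs_cong) (simp add: algebra_simps)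
  qed
  have DT: "(\<lambda>u. lin (\<lambda>t. ((dlt (lactw Xo ?c1 (lactw Xo \<gamma> t)) u + dlt ((l, ?s1) # lactw Xo \<gamma> t) u)
              + (dlt (lactw Xo ?c2 t) u + dlt ((l, ?s2) # t) u))
          - (dlt (lactw Xo (\<gamma> * ?c1 + ?c2) t) u + dlt ((l, bm_add (Xo l) (bm_lact (Xo l) \<gamma> ?s1) ?s2) # t) u)) F)
      \<in> rel_sub Xo"
    by (rule rs_lin[OF Ffin Dt])
  have VA: "Vr l (a x) (a y) F = (\<lambda>u. dlt [(l, bm_add (Xo l) ?sb ?s0)] u
     + lin (\<lambda>t. dlt (lactw Xo (\<gamma> * ?c1 + ?c2) t) u + dlt ((l, bm_add (Xo l) (bm_lact (Xo l) \<gamma> ?s1) ?s2) # t) u) F)"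
    unfolding Vr_def ax ay by simp
  have ceq: "cls Xo (\<lambda>u. dlt [(l, ?sb)] u + lin (\<lambda>w. snd (lam_word Xo l a w) u) (Vr l x y F)) = cls Xo (Vr l (a x) (a y) F)"
  proof (rule cls_eq)
    show "(\<lambda>u. (dlt [(l, ?sb)] u + lin (\<lambda>w. snd (lam_word Xo l a w) u) (Vr l x y F)) - Vr l (a x) (a y) F u) \<in> rel_sub Xo"
      using rs_add[OF D0 DT] unfolding lins VA lin_minus by (simp add: algebra_simps)
  qed
  have fx: "fst x = b" using xe by simp
  show ?thesis unfolding fx lam_eval[OF op VZ] ceq linf ax by simp
qed

end

lemma oprod_Nil: "oprod [] = id"
  by (simp add: oprod_def)

lemma oprod_Cons: "oprod (T # Ts) = T \<circ> oprod Ts"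
  by (simp add: oprod_def)

lemma oprod_pres: "(\<forall>T\<in>set Ts. \<forall>x\<in>P. T x \<in> P) \<Longrightarrow> x \<in> P \<Longrightarrow> oprod Ts x \<in> P"
  by (induction Ts) (auto simp: oprod_Nil oprod_Cons)

lemma oprod_into:
  assumes "\<forall>T\<in>set Ts. \<forall>x\<in>P. T x \<in> P" "\<forall>T\<in>set Ts. \<forall>x\<in>Q. T x \<in> Q" "\<exists>T\<in>set Ts. \<forall>x\<in>P. T x \<in> Q" "x \<in> P"
  shows "oprod Ts x \<in> Q"
  using assms
proof (induction Ts)
  case Nil then show ?case by simp
next
  case (Cons T Ts)
  show ?case
  proof (cases "\<forall>x\<in>P. T x \<in> Q")
    case True
    have "oprod Ts x \<in> P" using oprod_pres[of Ts P x] Cons.prems by simp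
    then show ?thesis using True by (simp add: oprod_Cons)
  next
    case False
    then have "\<exists>T\<in>set Ts. \<forall>x\<in>P. T x \<in> Q" using Cons.prems(3) by auto
    then have "oprod Ts x \<in> Q" using Cons.IH Cons.prems by simp
    then show ?thesis using Cons.prems(2) by (simp add: oprod_Cons)
  qed
qed

context fpc
begin

lemma AF_elim: "T \<in> AF Xo l \<Longrightarrow> \<exists>a. is_op (Xo l) a \<and> T = lam Xo l a"
  unfolding AF_def by blast

lemma AB_elim: "T \<in> AB Xo l \<Longrightarrow> \<exists>a. is_op (Xo l) a \<and> T = restr Xo (Ppr Xo l \<circ> lam Xo l a \<circ> Ppr Xo l)"
  unfolding AB_def by blast

lemma AB_app: assumes T: "T \<in> AB Xo l" and x: "x \<in> FPcar Xo"
  shows "\<exists>a. is_op (Xo l) a \<and> T x = Ppr Xo l (lam Xo l a (Ppr Xo l x))"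
  using AB_elim[OF T] x unfolding restr_def by auto

lemma opS_FP: assumes T: "T \<in> AF Xo l \<union> AB Xo l" and x: "x \<in> FPcar Xo" shows "T x \<in> FPcar Xo"
proof (cases "T \<in> AF Xo l")
  case True then show ?thesis using AF_elim lam_FP x by blast
next
  case False
  then have "T \<in> AB Xo l" using T by blast
  then obtain a where a: "is_op (Xo l) a" "T x = Ppr Xo l (lam Xo l a (Ppr Xo l x))" using AB_app x by blast
  show ?thesis unfolding a(2) by (rule Ppr_FP[OF lam_FP[OF a(1) Ppr_FP[OF x]]])
qed

lemma AB_R: assumes T: "T \<in> AB Xo l" and x: "x \<in> FPcar Xo" shows "T x \<in> Rset l"
proof -
  obtain a where a: "is_op (Xo l) a" "T x = Ppr Xo l (lam Xo l a (Ppr Xo l x))" using AB_app[OF T x] by blast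
  show ?thesis unfolding a(2) by (rule Ppr_R[OF lam_FP[OF a(1) Ppr_FP[OF x]]])
qed

lemma opS_R: assumes T: "T \<in> AF Xo l \<union> AB Xo l" and x: "x \<in> Rset l" shows "T x \<in> Rset l"
proof (cases "T \<in> AF Xo l")
  case True then show ?thesis using AF_elim lam_R x by blast
next
  case False
  then have "T \<in> AB Xo l" using T by blast
  then show ?thesis using AB_R Rset_FP[OF x] by blast
qed

lemma AB_JZ: assumes T: "T \<in> AB Xo l" and x: "x \<in> Jset l" shows "T x \<in> Zset"
proof -
  obtain a where a: "is_op (Xo l) a" "T x = Ppr Xo l (lam Xo l a (Ppr Xo l x))" using AB_app[OF T Jset_FP[OF x]] by blast
  show ?thesis unfolding a(2) by (rule Ppr_Z[OF lam_Z[OF a(1) Ppr_J[OF x]]])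
qed

lemma opS_J: assumes T: "T \<in> AF Xo l \<union> AB Xo l" and x: "x \<in> Jset l" shows "T x \<in> Jset l"
proof (cases "T \<in> AF Xo l")
  case True then show ?thesis using AF_elim lam_J x by blast
next
  case False
  then have "T \<in> AB Xo l" using T by blast
  then show ?thesis using AB_JZ x Zset_J by blast
qed

lemma opS_Z: assumes T: "T \<in> AF Xo l \<union> AB Xo l" and x: "x \<in> Zset" shows "T x \<in> Zset"
proof (cases "T \<in> AF Xo l")
  case True then show ?thesis using AF_elim lam_Z x by blast
next
  case False
  then have T': "T \<in> AB Xo l" using T by blast
  obtain a where a: "is_op (Xo l) a" "T x = Ppr Xo l (lam Xo l a (Ppr Xo l x))" using AB_app[OF T' Zset_FP[OF x]] by blast
  show ?thesis unfolding a(2) by (rule Ppr_Z[OF lam_Z[OF a(1) Ppr_Z[OF x]]])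
qed

lemma PV: assumes "\<forall>T\<in>set Ts. T \<in> AF Xo l"
  shows "\<exists>c. is_op (Xo l) c \<and> (\<forall>x y F. x \<in> Xcar (Xo l) \<longrightarrow> y \<in> Xcar (Xo l) \<longrightarrow> VC l F \<longrightarrow>
     oprod Ts (fst x, cls Xo (Vr l x y F)) = (fst (c x), cls Xo (Vr l (c x) (c y) F)))"
  using assms
proof (induction Ts)
  case Nil
  show ?case by (rule exI[of _ id]) (simp add: oprod_Nil is_op_id[unfolded id_def])
next
  case (Cons T Ts)
  obtain c where c: "is_op (Xo l) c" and cV: "\<forall>x y F. x \<in> Xcar (Xo l) \<longrightarrow> y \<in> Xcar (Xo l) \<longrightarrow> VC l F \<longrightarrow>
     oprod Ts (fst x, cls Xo (Vr l x y F)) = (fst (c x), cls Xo (Vr l (c x) (c y) F))" using Cons by auto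
  obtain a where a: "is_op (Xo l) a" "T = lam Xo l a" using AF_elim Cons.prems by auto
  have cc: "\<And>x. x \<in> Xcar (Xo l) \<Longrightarrow> c x \<in> Xcar (Xo l)" using op_car[OF bim c] .
  show ?case
  proof (rule exI[of _ "a \<circ> c"], intro conjI allI impI)
    show "is_op (Xo l) (a \<circ> c)" by (rule is_op_comp[OF a(1) c])
    fix x y F assume xy: "x \<in> Xcar (Xo l)" "y \<in> Xcar (Xo l)" "VC l F"
    have "oprod (T # Ts) (fst x, cls Xo (Vr l x y F)) = lam Xo l a (fst (c x), cls Xo (Vr l (c x) (c y) F))"
      using cV[rule_format, OF xy] a(2) by (simp add: oprod_Cons)
    also have "\<dots> = (fst (a (c x)), cls Xo (Vr l (a (c x)) (a (c y)) F))"
      by (rule V_lam[OF a(1) cc[OF xy(1)] cc[OF xy(2)] xy(3)])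
    finally show "oprod (T # Ts) (fst x, cls Xo (Vr l x y F)) = (fst ((a \<circ> c) x), cls Xo (Vr l ((a \<circ> c) x) ((a \<circ> c) y) F))"
      by simp
  qed
qed

lemma lactw_zero: assumes t: "alt_word Xo t" shows "dlt (lactw Xo 0 t) \<in> rel_sub Xo"
proof -
  obtain i0 x0 t' where te: "t = (i0, x0) # t'" using alt_nonempty[OF t] by (cases t) auto
  have x0: "x0 \<in> bm_car (Xo i0)" using t te alt_hd by fastforce
  have "lactw Xo 0 t = (i0, bm_zero (Xo i0)) # t'" unfolding te using bla0[OF bim x0] by simp
  moreover have "alt_word Xo ((i0, bm_zero (Xo i0)) # t')" using t te bz[OF bim] by (simp add: alt_Cons)
  ultimately show ?thesis using zero_word by simp
qed

lemma lactw_one: assumes t: "alt_word Xo t" shows "lactw Xo 1 t = t"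
proof -
  obtain i0 x0 t' where te: "t = (i0, x0) # t'" using alt_nonempty[OF t] by (cases t) auto
  have x0: "x0 \<in> bm_car (Xo i0)" using t te alt_hd by fastforce
  show ?thesis unfolding te using bla1[OF bim x0] by simp
qed

lemma STEP: assumes Ts: "\<forall>T\<in>set Ts. T \<in> AF Xo l" and E: "Exp Xo (oprod Ts) = 0"
    and f: "f \<in> ZW Xo" and fh: "\<forall>t. f t \<noteq> 0 \<longrightarrow> fst (hd t) \<noteq> l"
  shows "\<exists>g. oprod Ts (\<beta>, cls Xo f) = (0, cls Xo g) \<and> g \<in> ZW Xo \<and>
    (\<forall>w. g w \<noteq> 0 \<longrightarrow> fst (hd w) = l \<and> (\<beta> = 0 \<longrightarrow> 2 \<le> length w))"
proof -
  obtain c where c: "is_op (Xo l) c" and cV: "\<forall>x y F. x \<in> Xcar (Xo l) \<longrightarrow> y \<in> Xcar (Xo l) \<longrightarrow> VC l F \<longrightarrow>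
     oprod Ts (fst x, cls Xo (Vr l x y F)) = (fst (c x), cls Xo (Vr l (c x) (c y) F))" using PV[OF Ts] by blast
  let ?z = "bm_zero (Xo l)"
  have z: "?z \<in> bm_car (Xo l)" by (rule bz[OF bim])
  have X1: "(1, ?z) \<in> Xcar (Xo l)" and Xb: "(\<beta>, ?z) \<in> Xcar (Xo l)" using z by (simp_all add: Xcar_iff)
  have ffin: "finite {t. f t \<noteq> 0}" using ZW_fin[OF f] .
  have VCf: "VC l f" unfolding VC_def using f fh by blast
  have VC0: "VC l (\<lambda>_. 0)" unfolding VC_def using ZW_zero by simp
  have V0: "Vr l (1, ?z) (1, ?z) (\<lambda>_. 0) = dlt [(l, ?z)]" unfolding Vr_def by (simp add: lin_zero)
  have c0: "cls Xo (\<lambda>_. 0) = cls Xo (Vr l (1, ?z) (1, ?z) (\<lambda>_. 0))"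
    unfolding V0 by (rule cls_eq) (rule rs_cong[OF rs_neg[OF zero_single]], simp)
  have "oprod Ts (1, cls Xo (\<lambda>_. 0)) = (fst (c (1, ?z)), cls Xo (Vr l (c (1, ?z)) (c (1, ?z)) (\<lambda>_. 0)))"
    using cV[rule_format, OF X1 X1 VC0] unfolding c0 by simp
  then have fc: "fst (c (1, ?z)) = 0" using E unfolding Exp_def by simp
  define \<eta> where "\<eta> = snd (c (1, ?z))"
  have \<eta>: "\<eta> \<in> bm_car (Xo l)" unfolding \<eta>_def using op_car2[OF bim c z] .
  have c1: "c (1, ?z) = (0, \<eta>)" using fc \<eta>_def by (metis prod.collapse)
  have cb: "c (\<beta>, ?z) = (0, bm_lact (Xo l) \<beta> \<eta>)" using op_scal_l[OF bim c, of \<beta>] fc \<eta>_def by simp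
  have tp: "alt_word Xo t \<and> fst (hd t) \<noteq> l" if "f t \<noteq> 0" for t using ZW_alt[OF f that] fh that by blast
  have ceq_in: "cls Xo f = cls Xo (Vr l (\<beta>, ?z) (1, ?z) f)"
  proof (rule cls_eq)
    have Z: "(\<lambda>u. lin (\<lambda>t. dlt ((l, ?z) # t) u) f) \<in> rel_sub Xo"
    proof (rule rs_lin[OF ffin])
      fix t assume "f t \<noteq> 0"
      then have "alt_word Xo ((l, ?z) # t)" using tp alt_prefix z by blast
      then show "dlt ((l, ?z) # t) \<in> rel_sub Xo" by (rule zero_word)
    qed
    have l1: "lin (\<lambda>t. dlt (lactw Xo 1 t) u + dlt ((l, ?z) # t) u) f = f u + lin (\<lambda>t. dlt ((l, ?z) # t) u) f" for u
    proof -
      have "lin (\<lambda>t. dlt (lactw Xo 1 t) u + dlt ((l, ?z) # t) u) f = lin (\<lambda>t. dlt t u + dlt ((l, ?z) # t) u) f"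
        by (rule lin_cong) (simp add: lactw_one tp)
      then show ?thesis by (simp add: lin_plus lin_dlt_self[OF ffin])
    qed
    have "(\<lambda>u. - (dlt [(l, ?z)] u + lin (\<lambda>t. dlt ((l, ?z) # t) u) f)) \<in> rel_sub Xo"
      by (rule rs_neg[OF rs_add[OF zero_single Z]])
    then show "(\<lambda>u. f u - Vr l (\<beta>, ?z) (1, ?z) f u) \<in> rel_sub Xo"
      by (rule rs_cong) (simp add: Vr_def l1)
  qed
  have out: "oprod Ts (\<beta>, cls Xo f) = (0, cls Xo (Vr l (0, bm_lact (Xo l) \<beta> \<eta>) (0, \<eta>) f))"
    using cV[rule_format, OF Xb X1 VCf] unfolding ceq_in c1 cb by simp
  define g where "g = (\<lambda>u. (if \<beta> = 0 then 0 else dlt [(l, bm_lact (Xo l) \<beta> \<eta>)] u) + lin (\<lambda>t. dlt ((l, \<eta>) # t) u) f)"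
  have ceq_out: "cls Xo (Vr l (0, bm_lact (Xo l) \<beta> \<eta>) (0, \<eta>) f) = cls Xo g"
  proof (rule cls_eq)
    have Z: "(\<lambda>u. lin (\<lambda>t. dlt (lactw Xo 0 t) u) f) \<in> rel_sub Xo"
      by (rule rs_lin[OF ffin]) (simp add: lactw_zero tp)
    have D: "(\<lambda>u. dlt [(l, bm_lact (Xo l) \<beta> \<eta>)] u - (if \<beta> = 0 then 0 else dlt [(l, bm_lact (Xo l) \<beta> \<eta>)] u)) \<in> rel_sub Xo"
    proof (cases "\<beta> = 0")
      case True
      then show ?thesis using zero_single bla0[OF bim \<eta>] by simp
    next
      case False
      then show ?thesis using rs_zero by simp
    qed
    show "(\<lambda>u. Vr l (0, bm_lact (Xo l) \<beta> \<eta>) (0, \<eta>) f u - g u) \<in> rel_sub Xo"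
      by (rule rs_cong[OF rs_add[OF D Z]]) (simp add: Vr_def g_def lin_plus)
  qed
  have gZ: "g \<in> ZW Xo"
  proof -
    have 1: "(\<lambda>u. if \<beta> = 0 then 0 else dlt [(l, bm_lact (Xo l) \<beta> \<eta>)] u) \<in> ZW Xo"
    proof (cases "\<beta> = 0")
      case True then show ?thesis using ZW_zero by simp
    next
      case False
      have "dlt [(l, bm_lact (Xo l) \<beta> \<eta>)] \<in> ZW Xo" by (rule ZW_dlt) (simp add: alt_single bla[OF bim \<eta>])
      then show ?thesis using False by simp
    qed
    have 2: "(\<lambda>u. lin (\<lambda>t. dlt ((l, \<eta>) # t) u) f) \<in> ZW Xo"
    proof (rule ZW_lin[OF f])
      fix t assume "f t \<noteq> 0"
      then have "alt_word Xo ((l, \<eta>) # t)" using tp alt_prefix \<eta> by blast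
      then show "dlt ((l, \<eta>) # t) \<in> ZW Xo" by (rule ZW_dlt)
    qed
    show ?thesis unfolding g_def using ZW_add[OF 1 2] .
  qed
  have gs: "fst (hd w) = l \<and> (\<beta> = 0 \<longrightarrow> 2 \<le> length w)" if nz: "g w \<noteq> 0" for w
  proof (cases "lin (\<lambda>t. dlt ((l, \<eta>) # t) w) f = 0")
    case True
    then have "\<beta> \<noteq> 0" "w = [(l, bm_lact (Xo l) \<beta> \<eta>)]" using nz unfolding g_def by (auto simp: dlt_def split: if_splits)
    then show ?thesis by simp
  next
    case False
    then obtain t where t: "f t \<noteq> 0" "dlt ((l, \<eta>) # t) w \<noteq> 0" using lin_supp[of "\<lambda>t. dlt ((l, \<eta>) # t)" w f] by blast
    then have w: "w = (l, \<eta>) # t" by (simp add: dlt_def split: if_splits)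
    have "t \<noteq> []" using tp[OF t(1)] alt_nonempty by blast
    then show ?thesis using w by (cases t) auto
  qed
  show ?thesis using out ceq_out gZ gs by auto
qed

end

lemma down_ind: assumes "a \<le> j" "P j" "\<And>i. a \<le> i \<Longrightarrow> i < j \<Longrightarrow> P (Suc i) \<Longrightarrow> P i" shows "P a"
  using assms
proof (induction "j - a" arbitrary: a)
  case 0 then show ?case by simp
next
  case (Suc n)
  then have ps: "P (Suc a)" by simp
  have "a < j" using Suc.hyps(2) by simp
  then show ?case by (rule Suc.prems(3)[OF order_refl _ ps])
qed

theorem proposition6p8:
  fixes e :: "complex \<Rightarrow> 'b::ring_1"
    and Xo :: "'i \<Rightarrow> ('b, 'x) bimod"
    and S :: "'i \<Rightarrow> ('b, 'i, 'x) fpop set"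
    and m l1 l2 :: nat
    and k :: "nat \<Rightarrow> 'i"
    and Ts :: "nat \<Rightarrow> ('b, 'i, 'x) fpop list"
    and A :: "nat \<Rightarrow> ('b, 'i, 'x) fpop"
  assumes B_alg: "cplx_alg e"
    and bimods: "\<forall>l. is_bimod e (Xo l)"
    and S_sub: "\<forall>l. S l \<subseteq> AF Xo l \<union> AB Xo l"
    and simple: "\<forall>i\<in>{1..m}. Ts i \<noteq> [] \<and> set (Ts i) \<subseteq> S (k i) \<and> A i = oprod (Ts i)"
    and l_bounds: "1 \<le> l1" "l1 < l2" "l2 \<le> m"
    and not_bool: "\<forall>i\<in>{l1..l2}. \<not> boolean_prod Xo S (k i) (Ts i)"
    and left_end: "l1 = 1 \<or> boolean_prod Xo S (k (l1 - 1)) (Ts (l1 - 1))"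
    and right_end: "l2 = m \<or> boolean_prod Xo S (k (l2 + 1)) (Ts (l2 + 1))"
    and alternating: "\<forall>i. 1 \<le> i \<and> i < m \<longrightarrow> k i \<noteq> k (i + 1)"
    and centered: "\<forall>i\<in>{l1..l2}. Exp Xo (A i) = 0"
  shows "Exp Xo (oprod (map A [1..<m + 1])) = 0"
proof -
  interpret fpc e Xo by (unfold_locales) (use bimods in blast)
  define s where "s i = oprod (map A [i..<m + 1]) (1, cls Xo (\<lambda>_. 0))" for i
  have sm: "s (m + 1) = (1, cls Xo (\<lambda>_. 0))" unfolding s_def by (simp add: oprod_Nil)
  have sstep: "s i = oprod (Ts i) (s (Suc i))" if "1 \<le> i" "i \<le> m" for i
  proof -
    have "[i..<m + 1] = i # [Suc i..<m + 1]" using that by (simp add: upt_conv_Cons)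
    then show ?thesis unfolding s_def using simple that by (simp add: oprod_Cons)
  qed
  have opsS: "T \<in> AF Xo (k i) \<union> AB Xo (k i)" if "1 \<le> i" "i \<le> m" "T \<in> set (Ts i)" for i T
  proof -
    have "T \<in> S (k i)" using simple that by auto
    then show ?thesis using S_sub by blast
  qed
  have alt: "k i \<noteq> k (Suc i)" if "1 \<le> i" "i < m" for i using alternating that by simp
  have FP: "s i \<in> FPcar Xo" if "1 \<le> i" "i \<le> m + 1" for i
  proof (rule down_ind[where P = "\<lambda>i. s i \<in> FPcar Xo", OF that(2)])
    show "s (m + 1) \<in> FPcar Xo" unfolding sm FP_iff using ZW_zero by blast
    fix j assume j: "i \<le> j" "j < m + 1" "s (Suc j) \<in> FPcar Xo"
    have jb: "1 \<le> j" "j \<le> m" using that j by auto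
    have "\<forall>T\<in>set (Ts j). \<forall>x\<in>FPcar Xo. T x \<in> FPcar Xo" using opS_FP opsS[OF jb] by blast
    then have "oprod (Ts j) (s (Suc j)) \<in> FPcar Xo" using j(3) by (rule oprod_pres)
    then show "s j \<in> FPcar Xo" using sstep[of j] that j by simp
  qed
  have R: "\<exists>\<beta> f. s (l2 + 1) = (\<beta>, cls Xo f) \<and> f \<in> ZW Xo \<and> (\<forall>t. f t \<noteq> 0 \<longrightarrow> fst (hd t) \<noteq> k l2)"
  proof (cases "l2 = m")
    case True then show ?thesis using sm ZW_zero by auto
  next
    case False
    then have lm: "l2 < m" using l_bounds by simp
    let ?k' = "k (l2 + 1)"
    have b2: "1 \<le> l2 + 1" "l2 + 1 \<le> m" using lm by auto
    have bp: "boolean_prod Xo S ?k' (Ts (l2 + 1))" using right_end False by simp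
    have "s (l2 + 1) = oprod (Ts (l2 + 1)) (s (Suc (l2 + 1)))" using sstep[of "l2 + 1"] lm by simp
    moreover have "oprod (Ts (l2 + 1)) (s (Suc (l2 + 1))) \<in> Rset ?k'"
    proof (rule oprod_into[where P = "FPcar Xo"])
      show "\<forall>T\<in>set (Ts (l2 + 1)). \<forall>x\<in>FPcar Xo. T x \<in> FPcar Xo" using opS_FP opsS[OF b2] by blast
      show "\<forall>T\<in>set (Ts (l2 + 1)). \<forall>x\<in>Rset ?k'. T x \<in> Rset ?k'" using opS_R opsS[OF b2] by blast
      show "\<exists>T\<in>set (Ts (l2 + 1)). \<forall>x\<in>FPcar Xo. T x \<in> Rset ?k'"
        using bp AB_R unfolding boolean_prod_def by blast
      show "s (Suc (l2 + 1)) \<in> FPcar Xo" using FP lm by simp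
    qed
    ultimately have "s (l2 + 1) \<in> Rset ?k'" by simp
    then obtain \<beta> g where g: "s (l2 + 1) = (\<beta>, cls Xo g)" "g \<in> ZW Xo" "\<forall>w. g w \<noteq> 0 \<longrightarrow> (\<exists>\<xi>. w = [(?k', \<xi>)])"
      unfolding Rset_def by blast
    have "k l2 \<noteq> ?k'" using alt[of l2] l_bounds lm by simp
    then have "\<forall>t. g t \<noteq> 0 \<longrightarrow> fst (hd t) \<noteq> k l2" using g(3) by fastforce
    then show ?thesis using g by blast
  qed
  have AFi: "\<forall>T\<in>set (Ts i). T \<in> AF Xo (k i)" if "l1 \<le> i" "i \<le> l2" for i
  proof
    fix T assume T: "T \<in> set (Ts i)"
    have i: "1 \<le> i" "i \<le> m" using that l_bounds by auto
    have "T \<in> S (k i)" using simple T i by auto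
    moreover have "T \<notin> S (k i) \<inter> AB Xo (k i)" using not_bool that T unfolding boolean_prod_def by auto
    ultimately show "T \<in> AF Xo (k i)" using S_sub by blast
  qed
  have Ei: "Exp Xo (oprod (Ts i)) = 0" if "l1 \<le> i" "i \<le> l2" for i
    using centered simple that l_bounds by auto
  have Sl2: "\<exists>g. s l2 = (0, cls Xo g) \<and> g \<in> ZW Xo \<and> (\<forall>w. g w \<noteq> 0 \<longrightarrow> fst (hd w) = k l2)"
  proof -
    obtain \<beta> f where f: "s (l2 + 1) = (\<beta>, cls Xo f)" "f \<in> ZW Xo" "\<forall>t. f t \<noteq> 0 \<longrightarrow> fst (hd t) \<noteq> k l2"
      using R by blast
    have "s l2 = oprod (Ts l2) (\<beta>, cls Xo f)" using sstep[of l2] l_bounds f(1) by simp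
    then show ?thesis using STEP[OF AFi[of l2] Ei[of l2] f(2) f(3), of \<beta>] l_bounds by auto
  qed
  have Sl: "\<exists>g. s i = (0, cls Xo g) \<and> g \<in> ZW Xo \<and> (\<forall>w. g w \<noteq> 0 \<longrightarrow> fst (hd w) = k i \<and> (i < l2 \<longrightarrow> 2 \<le> length w))"
    if "l1 \<le> i" "i \<le> l2" for i
  proof (rule down_ind[where P = "\<lambda>i. \<exists>g. s i = (0, cls Xo g) \<and> g \<in> ZW Xo \<and> (\<forall>w. g w \<noteq> 0 \<longrightarrow> fst (hd w) = k i \<and> (i < l2 \<longrightarrow> 2 \<le> length w))", OF that(2)])
    show "\<exists>g. s l2 = (0, cls Xo g) \<and> g \<in> ZW Xo \<and> (\<forall>w. g w \<noteq> 0 \<longrightarrow> fst (hd w) = k l2 \<and> (l2 < l2 \<longrightarrow> 2 \<le> length w))"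
      using Sl2 by auto
    fix j assume j: "i \<le> j" "j < l2" "\<exists>g. s (Suc j) = (0, cls Xo g) \<and> g \<in> ZW Xo \<and> (\<forall>w. g w \<noteq> 0 \<longrightarrow> fst (hd w) = k (Suc j) \<and> (Suc j < l2 \<longrightarrow> 2 \<le> length w))"
    obtain g where g: "s (Suc j) = (0, cls Xo g)" "g \<in> ZW Xo" "\<forall>w. g w \<noteq> 0 \<longrightarrow> fst (hd w) = k (Suc j)"
      using j(3) by blast
    have jb: "1 \<le> j" "j < m" "l1 \<le> j" "j \<le> l2" using j that l_bounds by auto
    have "\<forall>t. g t \<noteq> 0 \<longrightarrow> fst (hd t) \<noteq> k j" using g(3) alt[OF jb(1) jb(2)] by auto
    then obtain g' where g': "oprod (Ts j) (0, cls Xo g) = (0, cls Xo g')" "g' \<in> ZW Xo"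
      "\<forall>w. g' w \<noteq> 0 \<longrightarrow> fst (hd w) = k j \<and> (0 = (0::'b) \<longrightarrow> 2 \<le> length w)"
      using STEP[OF AFi[OF jb(3) jb(4)] Ei[OF jb(3) jb(4)] g(2), of 0] by blast
    have "s j = (0, cls Xo g')" using sstep[of j] jb g(1) g'(1) by simp
    then show "\<exists>g. s j = (0, cls Xo g) \<and> g \<in> ZW Xo \<and> (\<forall>w. g w \<noteq> 0 \<longrightarrow> fst (hd w) = k j \<and> (j < l2 \<longrightarrow> 2 \<le> length w))"
      using g' by auto
  qed
  obtain g where g: "s l1 = (0, cls Xo g)" "g \<in> ZW Xo" "\<forall>w. g w \<noteq> 0 \<longrightarrow> fst (hd w) = k l1 \<and> 2 \<le> length w"
    using Sl[of l1] l_bounds by auto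
  have "fst (s 1) = 0"
  proof (cases "l1 = 1")
    case True then show ?thesis using g(1) by simp
  next
    case False
    then have l1b: "2 \<le> l1" using l_bounds by simp
    let ?k' = "k (l1 - 1)"
    have bp: "boolean_prod Xo S ?k' (Ts (l1 - 1))" using left_end False by simp
    have kk: "?k' \<noteq> k l1" using alt[of "l1 - 1"] l1b l_bounds by simp
    have J: "s l1 \<in> Jset ?k'" unfolding Jset_def using g kk by fastforce
    have b1: "1 \<le> l1 - 1" "l1 - 1 \<le> m" using l1b l_bounds by auto
    have "s (l1 - 1) = oprod (Ts (l1 - 1)) (s l1)" using sstep[OF b1] l1b by simp
    moreover have "oprod (Ts (l1 - 1)) (s l1) \<in> Zset"
    proof (rule oprod_into[where P = "Jset ?k'"])
      show "\<forall>T\<in>set (Ts (l1 - 1)). \<forall>x\<in>Jset ?k'. T x \<in> Jset ?k'" using opS_J opsS[OF b1] by blast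
      show "\<forall>T\<in>set (Ts (l1 - 1)). \<forall>x\<in>Zset. T x \<in> Zset" using opS_Z opsS[OF b1] by blast
      show "\<exists>T\<in>set (Ts (l1 - 1)). \<forall>x\<in>Jset ?k'. T x \<in> Zset"
        using bp AB_JZ unfolding boolean_prod_def by blast
      show "s l1 \<in> Jset ?k'" by (rule J)
    qed
    ultimately have Z: "s (l1 - 1) \<in> Zset" by simp
    have "s 1 \<in> Zset"
    proof (rule down_ind[where P = "\<lambda>i. s i \<in> Zset", OF b1(1) Z])
      fix j assume j: "1 \<le> j" "j < l1 - 1" "s (Suc j) \<in> Zset"
      have jb: "1 \<le> j" "j \<le> m" using j b1 by auto
      have "oprod (Ts j) (s (Suc j)) \<in> Zset"
        by (rule oprod_pres[OF _ j(3)]) (use opS_Z opsS[OF jb] in blast)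
      then show "s j \<in> Zset" using sstep[OF jb] by simp
    qed
    then show ?thesis unfolding Zset_def by auto
  qed
  then show ?thesis unfolding Exp_def s_def by simp
qed


end
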